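(* Assume $J$ satisfies (J). The following are equivalent: (i) $\int_0^\infty J(r)r^Ndr<\infty$; (ii) $\int_0^\infty J_*(l)\,l\,dl<\infty$; (iii) $\limsup_{R\to\infty}\int_0^R\int_R^\infty\tilde J(r,\rho)\,d\rho\,dr<\infty$; (iv) $\limsup_{R\to\infty}\int_0^R\int_R^\infty(r/R)^{N-1}\tilde J(r,\rho)\,d\rho\,dr<\infty$. Moreover, when these hold, $\int_0^\infty J_*(l)l\,dl=\lim_{R\to\infty}\int_0^R\int_R^\infty\tilde J(r,\rho)d\rho dr=\lim_{R\to\infty}\int_0^R\int_R^\infty(r/R)^{N-1}\tilde J(r,\rho)d\rho dr$.
   Context: $N\ge2$, $B_\rho=\{|x|<\rho\}\subset\mathbb R^N$. (J): $J\in C(\mathbb R_+)\cap L^\infty(\mathbb R_+)$, $J\ge0$, $J(0)>0$, $\int_{\mathbb R^N}J(|x|)dx=1$. $\tilde J(r,\rho)=\int_{\partial B_\rho}J(|x-y|)dS_y$ for $|x|=r$. $J_*(l)=\int_{\mathbb R^{N-1}}J(|(l,x')|)dx'$, $l\in\mathbb R$. *)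

theory Defs
  imports "HOL-Analysis.Analysis" "HOL-Probability.Probability"
begin

text \<open>R^k is rendered as the product measure space of functions on {..<k}
  (extensional functions, measure = k-fold product of Lebesgue measure).\<close>

definition Rn :: "nat \<Rightarrow> (nat \<Rightarrow> real) measure" where
  "Rn k = PiM {..<k} (\<lambda>_. lborel)"

definition enorm :: "nat \<Rightarrow> (nat \<Rightarrow> real) \<Rightarrow> real" where
  "enorm k x = sqrt (\<Sum>i<k. (x i)^2)"

text \<open>Surface integral over the sphere of radius rho in R^N, via the cone-measure
  formula: int_{|y|=rho} g dS = (N/rho) int_{|z|<rho} g(rho z/|z|) dz.\<close>

definition sphere_integral ::
  "nat \<Rightarrow> real \<Rightarrow> ((nat \<Rightarrow> real) \<Rightarrow> ennreal) \<Rightarrow> ennreal" where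
  "sphere_integral N \<rho> g =
     ennreal (real N / \<rho>) *
     (\<integral>\<^sup>+ z. g (\<lambda>i\<in>{..<N}. \<rho> * z i / enorm N z) * indicator {z. enorm N z < \<rho>} z \<partial>Rn N)"

definition pt :: "nat \<Rightarrow> real \<Rightarrow> (nat \<Rightarrow> real)" where
  "pt N r = (\<lambda>i\<in>{..<N}. if i = 0 then r else 0)"

definition Jtilde :: "nat \<Rightarrow> (real \<Rightarrow> real) \<Rightarrow> real \<Rightarrow> real \<Rightarrow> ennreal" where
  "Jtilde N J r \<rho> =
     sphere_integral N \<rho> (\<lambda>y. ennreal (J (enorm N (\<lambda>i. pt N r i - y i))))"

definition Jstar :: "nat \<Rightarrow> (real \<Rightarrow> real) \<Rightarrow> real \<Rightarrow> ennreal" where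
  "Jstar N J l = (\<integral>\<^sup>+ x'. ennreal (J (sqrt (l^2 + (enorm (N - 1) x')^2))) \<partial>Rn (N - 1))"

definition dbl :: "nat \<Rightarrow> (real \<Rightarrow> real) \<Rightarrow> (real \<Rightarrow> real \<Rightarrow> real) \<Rightarrow> real \<Rightarrow> ennreal" where
  "dbl N J w R =
     (\<integral>\<^sup>+ r. (\<integral>\<^sup>+ \<rho>. ennreal (w r R) * Jtilde N J r \<rho> * indicator {R..} \<rho> \<partial>lborel)
              * indicator {0..R} r \<partial>lborel)"

end

theory Submission
  imports Defs
begin

interpretation PL: product_sigma_finite "\<lambda>_::nat. lborel::real measure"
  by standard

abbreviation "PM I \<equiv> PiM I (\<lambda>_::nat. lborel::real measure)"

lemma affine_PiM:
  fixes I :: "nat set" and c :: real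
  assumes "finite I" "c \<noteq> 0"
  shows "f \<in> borel_measurable (PiM I (\<lambda>_::nat. lborel::real measure)) \<Longrightarrow>
    (\<integral>\<^sup>+ x. f (\<lambda>i\<in>I. a i + c * x i) \<partial>PiM I (\<lambda>_::nat. lborel::real measure))
     = ennreal ((1/\<bar>c\<bar>) ^ card I) * (\<integral>\<^sup>+ x. f x \<partial>PiM I (\<lambda>_::nat. lborel::real measure))"
  using assms(1)
proof (induction I arbitrary: f rule: finite_induct)
  case empty
  then show ?case by (simp add: PiM_empty nn_integral_count_space_finite)
next
  case (insert i I)
  note [measurable] = insert.prems
  define G where "G u = (\<integral>\<^sup>+ y. f (u(i := y)) \<partial>lborel)" for u
  have Gm[measurable]: "G \<in> borel_measurable (PiM I (\<lambda>_::nat. lborel::real measure))"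
    unfolding G_def by measurable
  have "(\<integral>\<^sup>+ x. f (\<lambda>j\<in>insert i I. a j + c * x j) \<partial>PiM (insert i I) (\<lambda>_::nat. lborel::real measure))
     = (\<integral>\<^sup>+ x. (\<integral>\<^sup>+ y. f ((\<lambda>j\<in>I. a j + c * x j)(i := a i + c * y)) \<partial>lborel) \<partial>PiM I (\<lambda>_::nat. lborel::real measure))"
    apply (subst PL.product_nn_integral_insert)
    using insert apply (auto intro!: nn_integral_cong arg_cong[where f=f])
    done
  also have "\<dots> = (\<integral>\<^sup>+ x. ennreal (1/\<bar>c\<bar>) * G (\<lambda>j\<in>I. a j + c * x j) \<partial>PiM I (\<lambda>_::nat. lborel::real measure))"
  proof (rule nn_integral_cong)
    fix x assume x: "x \<in> space (PiM I (\<lambda>_::nat. lborel::real measure))"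
    let ?u = "\<lambda>j\<in>I. a j + c * x j"
    have um: "?u \<in> space (PiM I (\<lambda>_::nat. lborel::real measure))" by (simp add: space_PiM)
    have hm[measurable]: "(\<lambda>y. f (?u(i := y))) \<in> borel_measurable lborel"
      using measurable_comp[OF measurable_component_update[OF um \<open>i \<notin> I\<close>] insert.prems]
      by (simp add: comp_def)
    show "(\<integral>\<^sup>+ y. f (?u(i := a i + c * y)) \<partial>lborel) = ennreal (1/\<bar>c\<bar>) * G ?u"
      unfolding G_def
      using nn_integral_real_affine[OF _ \<open>c \<noteq> 0\<close>, of "\<lambda>y. f (?u(i := y))" "a i"] hm \<open>c\<noteq>0\<close>
      by (simp add: ennreal_mult'[symmetric] divide_simps mult.assoc[symmetric] ennreal_mult[symmetric])
  qed
  also have "\<dots> = ennreal (1/\<bar>c\<bar>) * (\<integral>\<^sup>+ x. G (\<lambda>j\<in>I. a j + c * x j) \<partial>PiM I (\<lambda>_::nat. lborel::real measure))"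
    by (rule nn_integral_cmult) measurable
  also have "\<dots> = ennreal (1/\<bar>c\<bar>) * (ennreal ((1/\<bar>c\<bar>) ^ card I) * (\<integral>\<^sup>+ x. G x \<partial>PiM I (\<lambda>_::nat. lborel::real measure)))"
    by (subst insert.IH[OF Gm]) (rule refl)
  also have "(\<integral>\<^sup>+ x. G x \<partial>PiM I (\<lambda>_::nat. lborel::real measure)) = (\<integral>\<^sup>+ x. f x \<partial>PiM (insert i I) (\<lambda>_::nat. lborel::real measure))"
    unfolding G_def using insert by (subst PL.product_nn_integral_insert) auto
  finally show ?case using insert
    by (simp add: mult.assoc[symmetric] ennreal_mult[symmetric])
qed

abbreviation "RN N \<equiv> PiM {..<N} (\<lambda>_::nat. lborel::real measure)"

lemma enorm_meas[measurable]: "enorm N \<in> borel_measurable (RN N)"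
  unfolding enorm_def[abs_def] by measurable

lemma enorm_nonneg: "enorm N x \<ge> 0"
  unfolding enorm_def by (simp add: sum_nonneg)

lemma null_zero_coord:
  assumes "0 < N"
  shows "emeasure (RN N) {z \<in> space (RN N). z 0 = 0} = 0"
proof -
  have "{z \<in> space (RN N). z 0 = 0} = Pi\<^sub>E {..<N} (\<lambda>i. if i = 0 then {0} else UNIV)"
    using assms by (auto simp: space_PiM PiE_iff extensional_def split: if_splits)
  also have "emeasure (RN N) \<dots> = (\<Prod>i<N. emeasure lborel (if i = 0 then {0::real} else UNIV))"
    by (rule PL.emeasure_PiM) auto
  also have "\<dots> = 0"
    using assms by (intro prod_zero bexI[of _ 0]) auto
  finally show ?thesis .
qed

lemma enorm_zero_coord:
  assumes "0 < N" "enorm N z = 0" shows "z 0 = 0"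
proof -
  have "(\<Sum>i<N. (z i)^2) = 0" using assms(2) unfolding enorm_def by (simp add: sum_nonneg)
  then have "\<forall>i\<in>{..<N}. (z i)^2 = 0" by (subst (asm) sum_nonneg_eq_0_iff) auto
  then show "z 0 = 0" using assms by auto
qed

lemma AE_enorm_nz:
  assumes "0 < N"
  shows "AE z in RN N. enorm N z \<noteq> 0"
proof -
  have [measurable]: "(\<lambda>x. x 0) \<in> borel_measurable (RN N)"
    using assms by (auto intro: measurable_component_singleton)
  have meas: "{z \<in> space (RN N). z 0 = 0} \<in> sets (RN N)" by measurable
  have sub: "{z \<in> space (RN N). \<not> enorm N z \<noteq> 0} \<subseteq> {z \<in> space (RN N). z 0 = 0}"
    using enorm_zero_coord[OF assms] by auto
  show ?thesis by (rule AE_I[OF sub null_zero_coord[OF assms] meas])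
qed

lemma kernel_int:
  assumes "0 < N"
  shows "(\<integral>\<^sup>+ l. ennreal (real N / l ^ (N+1)) * indicator {1<..} l \<partial>lborel) = 1"
proof -
  have "(\<integral>\<^sup>+ l. ennreal (real N / l ^ (N+1)) * indicator {1<..} l \<partial>lborel)
      = (\<integral>\<^sup>+ l. ennreal (real N / l ^ (N+1)) * indicator {1..} l \<partial>lborel)"
    by (intro nn_integral_cong_AE, use AE_lborel_singleton[of 1] in eventually_elim)
       (auto split: split_indicator)
  also have "\<dots> = ennreal (0 - (- inverse (1 ^ N)))"
  proof (rule nn_integral_FTC_atLeast)
    show "(\<lambda>l. real N / l ^ (N+1)) \<in> borel_measurable borel" by measurable
    fix x :: real assume x: "1 \<le> x"
    have x0: "x \<noteq> 0" using x by auto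
    have "DERIV (\<lambda>l. l ^ N) x :> real N * x ^ (N - 1)" using DERIV_pow[of N x] by simp
    from DERIV_inverse_fun[OF this] x0
    have "DERIV (\<lambda>l. inverse (l ^ N)) x :> - (real N * x ^ (N - 1) * inverse ((x ^ N)^2))"
      by (simp add: power2_eq_square)
    from DERIV_minus[OF this]
    have d: "DERIV (\<lambda>l. - inverse (l ^ N)) x :> real N * x ^ (N - 1) * inverse ((x ^ N)^2)"
      by simp
    have "x ^ (N - 1) * inverse ((x ^ N)^2) = inverse (x ^ (N+1))"
    proof -
      have e: "(N + 1) + (N - 1) = N + N" using assms by simp
      have "x ^ (N + 1) * x ^ (N - 1) = (x ^ N)^2"
        by (simp only: power_add[symmetric] e power2_eq_square)
      then show ?thesis using x0 by (simp add: field_simps)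
    qed
    then show "DERIV (\<lambda>l. - inverse (l ^ N)) x :> real N / x ^ (N + 1)"
      using d by (simp add: divide_inverse mult.assoc)
    show "0 \<le> real N / x ^ (N+1)" using x by simp
  next
    show "((\<lambda>l::real. - inverse (l ^ N)) \<longlongrightarrow> 0) at_top"
    proof -
      have "filterlim (\<lambda>l::real. l ^ N) at_top at_top"
        using assms by (intro filterlim_pow_at_top filterlim_ident) auto
      then have "((\<lambda>l::real. inverse (l ^ N)) \<longlongrightarrow> 0) at_top"
        by (rule tendsto_inverse_0_at_top)
      then have "((\<lambda>l::real. - inverse (l ^ N)) \<longlongrightarrow> - 0) at_top"
        by (rule tendsto_minus)
      then show ?thesis by simp
    qed
  qed
  finally show ?thesis by simp
qed

lemma sigma_RN: "sigma_finite_measure (PM I)" if "finite I"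
  using PL.sigma_finite[OF that] .

lemma polar:
  assumes N: "0 < N" and f[measurable]: "f \<in> borel_measurable (RN N)"
  shows "(\<integral>\<^sup>+ y. f y \<partial>RN N) = (\<integral>\<^sup>+ \<mu>. sphere_integral N \<mu> f \<partial>lborel)"
proof -
  interpret P: pair_sigma_finite lborel "RN N"
    by (intro pair_sigma_finite.intro lborel.sigma_finite_measure_axioms sigma_RN) simp
  define k where "k l = ennreal (real N / l ^ (N+1)) * indicator {1<..} l" for l :: real
  have km[measurable]: "k \<in> borel_measurable lborel" unfolding k_def by measurable
  have "(\<integral>\<^sup>+ y. f y \<partial>RN N) = (\<integral>\<^sup>+ l. k l \<partial>lborel) * (\<integral>\<^sup>+ y. f y \<partial>RN N)"
    using kernel_int[OF N] unfolding k_def by simp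
  also have "\<dots> = (\<integral>\<^sup>+ l. k l * (\<integral>\<^sup>+ y. f y \<partial>RN N) \<partial>lborel)"
    by (rule nn_integral_multc[symmetric]) measurable
  also have "\<dots> = (\<integral>\<^sup>+ l. (\<integral>\<^sup>+ y. ennreal (real N / l) * indicator {1<..} l *
        f (\<lambda>i\<in>{..<N}. 0 + l * y i) \<partial>RN N) \<partial>lborel)"
  proof (rule nn_integral_cong)
    fix l :: real
    show "k l * integral\<^sup>N (RN N) f = (\<integral>\<^sup>+ y. ennreal (real N / l) * indicator {1<..} l *
        f (\<lambda>i\<in>{..<N}. 0 + l * y i) \<partial>RN N)"
    proof (cases "1 < l")
      case True
      then have l0: "l \<noteq> 0" "l > 0" by auto
      have aff: "(\<integral>\<^sup>+ y. f (\<lambda>i\<in>{..<N}. 0 + l * y i) \<partial>RN N) = ennreal ((1/\<bar>l\<bar>) ^ N) * integral\<^sup>N (RN N) f"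
        using affine_PiM[OF _ l0(1) f, of "\<lambda>_. 0"] by simp
      have "(\<integral>\<^sup>+ y. ennreal (real N / l) * indicator {1<..} l * f (\<lambda>i\<in>{..<N}. 0 + l * y i) \<partial>RN N)
          = ennreal (real N / l) * (\<integral>\<^sup>+ y. f (\<lambda>i\<in>{..<N}. 0 + l * y i) \<partial>RN N)"
        using True by (subst nn_integral_cmult[symmetric]) (auto, measurable)
      also have "\<dots> = ennreal (real N / l) * ennreal ((1/l) ^ N) * integral\<^sup>N (RN N) f"
        using aff l0 by (simp add: mult.assoc)
      also have "ennreal (real N / l) * ennreal ((1/l) ^ N) = k l"
        unfolding k_def using True l0
        by (simp add: ennreal_mult[symmetric] power_divide field_simps)
      finally show ?thesis by (rule sym)
    qed (simp add: k_def)
  qed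
  also have "\<dots> = (\<integral>\<^sup>+ y. (\<integral>\<^sup>+ l. ennreal (real N / l) * indicator {1<..} l *
        f (\<lambda>i\<in>{..<N}. 0 + l * y i) \<partial>lborel) \<partial>RN N)"
    by (rule P.Fubini'[symmetric]) measurable
  also have "\<dots> = (\<integral>\<^sup>+ y. (\<integral>\<^sup>+ m. ennreal (real N / m) * indicator {enorm N y<..} m *
        f (\<lambda>i\<in>{..<N}. m * y i / enorm N y) \<partial>lborel) \<partial>RN N)"
  proof (rule nn_integral_cong_AE, use AE_enorm_nz[OF N] in eventually_elim)
    fix y assume y: "enorm N y \<noteq> 0"
    define e where "e = enorm N y"
    have e: "e > 0" using y enorm_nonneg[of N y] unfolding e_def by linarith
    have hm: "(\<lambda>l. ennreal (real N / l) * indicator {1<..} l * f (\<lambda>i\<in>{..<N}. 0 + l * y i)) \<in> borel_measurable borel"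
      by measurable
    have "(\<integral>\<^sup>+ l. ennreal (real N / l) * indicator {1<..} l * f (\<lambda>i\<in>{..<N}. 0 + l * y i) \<partial>lborel)
      = \<bar>1/e\<bar> * (\<integral>\<^sup>+ m. ennreal (real N / (0 + 1/e * m)) * indicator {1<..} (0 + 1/e*m) *
           f (\<lambda>i\<in>{..<N}. 0 + (0 + 1/e*m) * y i) \<partial>lborel)"
      by (rule nn_integral_real_affine[OF hm]) (use e in simp)
    also have "\<dots> = (\<integral>\<^sup>+ m. ennreal (real N / m) * indicator {e<..} m *
        f (\<lambda>i\<in>{..<N}. m * y i / e) \<partial>lborel)"
    proof -
      have "ennreal \<bar>1/e\<bar> * (\<integral>\<^sup>+ m. ennreal (real N / (0 + 1/e * m)) * indicator {1<..} (0 + 1/e*m) *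
           f (\<lambda>i\<in>{..<N}. 0 + (0 + 1/e*m) * y i) \<partial>lborel)
        = (\<integral>\<^sup>+ m. ennreal \<bar>1/e\<bar> * (ennreal (real N / (0 + 1/e * m)) * indicator {1<..} (0 + 1/e*m) *
           f (\<lambda>i\<in>{..<N}. 0 + (0 + 1/e*m) * y i)) \<partial>lborel)"
        by (rule nn_integral_cmult[symmetric]) measurable
      also have "\<dots> = (\<integral>\<^sup>+ m. ennreal (real N / m) * indicator {e<..} m *
        f (\<lambda>i\<in>{..<N}. m * y i / e) \<partial>lborel)"
      proof (rule nn_integral_cong)
        fix m :: real
        show "ennreal \<bar>1/e\<bar> * (ennreal (real N / (0 + 1/e * m)) * indicator {1<..} (0 + 1/e*m) *
           f (\<lambda>i\<in>{..<N}. 0 + (0 + 1/e*m) * y i)) = ennreal (real N / m) * indicator {e<..} m *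
        f (\<lambda>i\<in>{..<N}. m * y i / e)"
        proof (cases "e < m")
          case True
          then have m: "m > 0" using e by simp
          have "1 < m / e" using True e by (simp add: field_simps)
          then have i1: "indicator {1<..} (0 + 1/e*m) = (1::ennreal)" by simp
          have i2: "indicator {e<..} m = (1::ennreal)" using True by simp
          have eqR: "(\<lambda>i\<in>{..<N}. 0 + (0 + 1/e*m) * y i) = (\<lambda>i\<in>{..<N}. m * y i / e)"
            by (rule restrict_ext) simp
          have eqE: "ennreal \<bar>1/e\<bar> * ennreal (real N / (0 + 1/e * m)) = ennreal (real N / m)"
          proof -
            have "\<bar>1/e\<bar> * (real N / (0 + 1/e * m)) = real N / m" using e m by simp
            then show ?thesis using e m by (simp add: ennreal_mult'[symmetric])
          qed
          show ?thesis
            by (simp only: mult.assoc[symmetric] eqE i1 i2 eqR mult_1_right)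
        next
          case False
          then have "\<not> 1 < 1/e * m" using e by (simp add: field_simps)
          then show ?thesis using False by simp
        qed
      qed
      finally show ?thesis by simp
    qed
    finally show "(\<integral>\<^sup>+ l. ennreal (real N / l) * indicator {1<..} l * f (\<lambda>i\<in>{..<N}. 0 + l * y i) \<partial>lborel) =
         (\<integral>\<^sup>+ m. ennreal (real N / m) * indicator {enorm N y<..} m * f (\<lambda>i\<in>{..<N}. m * y i / enorm N y) \<partial>lborel)"
      unfolding e_def .
  qed
  also have "\<dots> = (\<integral>\<^sup>+ m. (\<integral>\<^sup>+ y. ennreal (real N / m) * indicator {enorm N y<..} m *
        f (\<lambda>i\<in>{..<N}. m * y i / enorm N y) \<partial>RN N) \<partial>lborel)"
  proof (rule P.Fubini')
    have T[measurable]: "(\<lambda>x. \<lambda>i\<in>{..<N}. fst x * snd x i / enorm N (snd x)) \<in> measurable (lborel \<Otimes>\<^sub>M RN N) (RN N)"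
      by (rule measurable_restrict) measurable
    have [measurable]: "Measurable.pred (lborel \<Otimes>\<^sub>M RN N) (\<lambda>x. fst x \<in> {enorm N (snd x)<..})"
      by (simp only: greaterThan_iff) measurable
    show "(\<lambda>(x, y). ennreal (real N / x) * indicator {enorm N y<..} x * f (\<lambda>i\<in>{..<N}. x * y i / enorm N y))
       \<in> borel_measurable (lborel \<Otimes>\<^sub>M RN N)" by measurable
  qed
  also have "\<dots> = (\<integral>\<^sup>+ m. sphere_integral N m f \<partial>lborel)"
  proof (rule nn_integral_cong)
    fix m :: real
    have "(\<integral>\<^sup>+ y. ennreal (real N / m) * indicator {enorm N y<..} m *
        f (\<lambda>i\<in>{..<N}. m * y i / enorm N y) \<partial>RN N)
      = (\<integral>\<^sup>+ y. ennreal (real N / m) * (f (\<lambda>i\<in>{..<N}. m * y i / enorm N y) * indicator {z. enorm N z < m} y) \<partial>RN N)"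
      by (intro nn_integral_cong) (simp split: split_indicator)
    also have "\<dots> = sphere_integral N m f"
      unfolding sphere_integral_def Rn_def by (rule nn_integral_cmult) measurable
    finally show "(\<integral>\<^sup>+ y. ennreal (real N / m) * indicator {enorm N y<..} m *
        f (\<lambda>i\<in>{..<N}. m * y i / enorm N y) \<partial>RN N) = sphere_integral N m f" .
  qed
  finally show ?thesis .
qed

lemma enorm_scale: "enorm N (\<lambda>i\<in>{..<N}. t * z i) = \<bar>t\<bar> * enorm N z"
proof -
  have "(\<Sum>i<N. ((\<lambda>i\<in>{..<N}. t * z i) i)^2) = t^2 * (\<Sum>i<N. (z i)^2)"
    by (simp add: sum_distrib_left power_mult_distrib)
  then show ?thesis unfolding enorm_def by (simp add: real_sqrt_mult)
qed

lemma cone_radial: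
  assumes N: "0 < N" and Cm: "C \<in> sets (RN N)"
    and cone: "\<And>z t. t > 0 \<Longrightarrow> z \<in> space (RN N) \<Longrightarrow> ((\<lambda>i\<in>{..<N}. t * z i) \<in> C \<longleftrightarrow> z \<in> C)"
    and phi[measurable]: "\<phi> \<in> borel_measurable borel"
  shows "(\<integral>\<^sup>+ z. \<phi> (enorm N z) * indicator C z \<partial>RN N)
    = ennreal (real N) * emeasure (RN N) (C \<inter> {z. enorm N z < 1}) *
      (\<integral>\<^sup>+ r. \<phi> r * ennreal (r ^ (N - 1)) * indicator {0<..} r \<partial>lborel)"
proof -
  note Cm[measurable]
  define E where "E = emeasure (RN N) (C \<inter> {z. enorm N z < 1})"
  have ball_m[measurable]: "{z \<in> space (RN N). enorm N z < r} \<in> sets (RN N)" for r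
    by measurable
  have C_sub: "C \<subseteq> space (RN N)" using sets.sets_into_space[OF Cm] .
  have Em: "emeasure (RN N) (C \<inter> {z. enorm N z < \<mu>}) = ennreal (\<mu> ^ N) * E" if mu: "\<mu> > 0" for \<mu>
  proof -
    have set1: "C \<inter> {z. enorm N z < 1} \<in> sets (RN N)"
    proof -
      have "C \<inter> {z. enorm N z < 1} = C \<inter> {z \<in> space (RN N). enorm N z < 1}" using C_sub by auto
      then show ?thesis by simp
    qed
    have set\<mu>: "C \<inter> {z. enorm N z < \<mu>} \<in> sets (RN N)"
    proof -
      have "C \<inter> {z. enorm N z < \<mu>} = C \<inter> {z \<in> space (RN N). enorm N z < \<mu>}" using C_sub by auto
      then show ?thesis by simp
    qed
    have "(\<integral>\<^sup>+ z. indicator (C \<inter> {z. enorm N z < 1}) (\<lambda>i\<in>{..<N}. 0 + (1/\<mu>) * z i) \<partial>RN N)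
        = ennreal ((1/\<bar>1/\<mu>\<bar>) ^ card {..<N}) * (\<integral>\<^sup>+ z. indicator (C \<inter> {z. enorm N z < 1}) z \<partial>RN N)"
      by (rule affine_PiM) (use mu set1 in auto)
    also have "\<dots> = ennreal (\<mu> ^ N) * E"
      using mu set1 unfolding E_def by simp
    also have "(\<integral>\<^sup>+ z. indicator (C \<inter> {z. enorm N z < 1}) (\<lambda>i\<in>{..<N}. 0 + (1/\<mu>) * z i) \<partial>RN N)
        = (\<integral>\<^sup>+ z. indicator (C \<inter> {z. enorm N z < \<mu>}) z \<partial>RN N)"
    proof (rule nn_integral_cong)
      fix z assume z: "z \<in> space (RN N)"
      have "(\<lambda>i\<in>{..<N}. 0 + (1/\<mu>) * z i) \<in> C \<longleftrightarrow> z \<in> C"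
        using cone[of "1/\<mu>" z] mu z by simp
      moreover have "enorm N (\<lambda>i\<in>{..<N}. 0 + (1/\<mu>) * z i) = enorm N z / \<mu>"
        using enorm_scale[of N "1/\<mu>" z] mu by simp
      moreover have "enorm N z / \<mu> < 1 \<longleftrightarrow> enorm N z < \<mu>" using mu by (simp add: field_simps)
      ultimately show "indicator (C \<inter> {z. enorm N z < 1}) (\<lambda>i\<in>{..<N}. 0 + (1/\<mu>) * z i)
          = (indicator (C \<inter> {z. enorm N z < \<mu>}) z :: ennreal)"
        by (simp split: split_indicator)
    qed
    also have "\<dots> = emeasure (RN N) (C \<inter> {z. enorm N z < \<mu>})"
      using set\<mu> by simp
    finally show ?thesis .
  qed
  have "(\<integral>\<^sup>+ z. \<phi> (enorm N z) * indicator C z \<partial>RN N)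
      = (\<integral>\<^sup>+ \<mu>. sphere_integral N \<mu> (\<lambda>z. \<phi> (enorm N z) * indicator C z) \<partial>lborel)"
    by (rule polar[OF N]) measurable
  also have "\<dots> = (\<integral>\<^sup>+ \<mu>. ennreal (real N) * E * (\<phi> \<mu> * ennreal (\<mu> ^ (N - 1)) * indicator {0<..} \<mu>) \<partial>lborel)"
  proof (rule nn_integral_cong)
    fix \<mu> :: real
    show "sphere_integral N \<mu> (\<lambda>z. \<phi> (enorm N z) * indicator C z)
        = ennreal (real N) * E * (\<phi> \<mu> * ennreal (\<mu> ^ (N - 1)) * indicator {0<..} \<mu>)"
    proof (cases "\<mu> > 0")
      case False
      then have "real N / \<mu> \<le> 0" by (simp add: divide_nonneg_nonpos)
      then show ?thesis using False unfolding sphere_integral_def by (simp add: ennreal_eq_0_iff)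
    next
      case mu: True
      have "(\<integral>\<^sup>+ z. \<phi> (enorm N (\<lambda>i\<in>{..<N}. \<mu> * z i / enorm N z)) * indicator C (\<lambda>i\<in>{..<N}. \<mu> * z i / enorm N z)
                 * indicator {z. enorm N z < \<mu>} z \<partial>Rn N)
          = (\<integral>\<^sup>+ z. \<phi> \<mu> * indicator (C \<inter> {z. enorm N z < \<mu>}) z \<partial>RN N)"
        unfolding Rn_def
      proof (rule nn_integral_cong_AE)
        show "AE z in RN N. \<phi> (enorm N (\<lambda>i\<in>{..<N}. \<mu> * z i / enorm N z)) * indicator C (\<lambda>i\<in>{..<N}. \<mu> * z i / enorm N z)
                 * indicator {z. enorm N z < \<mu>} z = \<phi> \<mu> * indicator (C \<inter> {z. enorm N z < \<mu>}) z"
          using AE_enorm_nz[OF N] AE_space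
        proof eventually_elim
          case (elim z)
          have e: "enorm N z > 0" using elim enorm_nonneg[of N z] by linarith
          have eq: "(\<lambda>i\<in>{..<N}. \<mu> * z i / enorm N z) = (\<lambda>i\<in>{..<N}. (\<mu> / enorm N z) * z i)"
            by (rule restrict_ext) simp
          have n: "enorm N (\<lambda>i\<in>{..<N}. \<mu> * z i / enorm N z) = \<mu>"
            unfolding eq enorm_scale using e mu by simp
          have c: "(\<lambda>i\<in>{..<N}. \<mu> * z i / enorm N z) \<in> C \<longleftrightarrow> z \<in> C"
            unfolding eq using cone[of "\<mu> / enorm N z" z] e mu elim by simp
          show ?case unfolding n using c by (simp split: split_indicator)
        qed
      qed
      also have "\<dots> = \<phi> \<mu> * emeasure (RN N) (C \<inter> {z. enorm N z < \<mu>})"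
      proof -
        have "C \<inter> {z. enorm N z < \<mu>} \<in> sets (RN N)"
        proof -
          have "C \<inter> {z. enorm N z < \<mu>} = C \<inter> {z \<in> space (RN N). enorm N z < \<mu>}" using C_sub by auto
          then show ?thesis by simp
        qed
        then show ?thesis by (simp add: nn_integral_cmult)
      qed
      finally have I: "(\<integral>\<^sup>+ z. \<phi> (enorm N (\<lambda>i\<in>{..<N}. \<mu> * z i / enorm N z)) * indicator C (\<lambda>i\<in>{..<N}. \<mu> * z i / enorm N z)
                 * indicator {z. enorm N z < \<mu>} z \<partial>Rn N) = \<phi> \<mu> * (ennreal (\<mu> ^ N) * E)"
        using Em[OF mu] by simp
      have pw: "real N / \<mu> * \<mu> ^ N = real N * \<mu> ^ (N - 1)"
      proof -
        have "\<mu> ^ N = \<mu> * \<mu> ^ (N - 1)" using N by (simp add: power_eq_if)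
        then show ?thesis using mu by simp
      qed
      have "ennreal (real N / \<mu>) * (\<phi> \<mu> * (ennreal (\<mu> ^ N) * E))
          = (ennreal (real N / \<mu>) * ennreal (\<mu> ^ N)) * E * \<phi> \<mu>"
        by (simp add: ac_simps)
      also have "ennreal (real N / \<mu>) * ennreal (\<mu> ^ N) = ennreal (real N) * ennreal (\<mu> ^ (N - 1))"
        using mu pw by (simp add: ennreal_mult[symmetric])
      finally show ?thesis unfolding sphere_integral_def I using mu
        by (simp add: ac_simps)
    qed
  qed
  also have "\<dots> = ennreal (real N) * E * (\<integral>\<^sup>+ r. \<phi> r * ennreal (r ^ (N - 1)) * indicator {0<..} r \<partial>lborel)"
    by (rule nn_integral_cmult) measurable
  finally show ?thesis unfolding E_def .
qed

lemma shift_PiM: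
  "distr (PM {..<n}) (PM {Suc 0..<Suc n}) (\<lambda>x. \<lambda>i\<in>{Suc 0..<Suc n}. x (i - 1)) = PM {Suc 0..<Suc n}"
proof (rule PL.PiM_eqI)
  show "finite {Suc 0..<Suc n}" by simp
  show "sets (distr (PM {..<n}) (PM {Suc 0..<Suc n}) (\<lambda>x. \<lambda>i\<in>{Suc 0..<Suc n}. x (i - 1))) = sets (PM {Suc 0..<Suc n})"
    by simp
  fix A :: "nat \<Rightarrow> real set" assume A: "\<And>i. i \<in> {Suc 0..<Suc n} \<Longrightarrow> A i \<in> sets lborel"
  have meas: "(\<lambda>x. \<lambda>i\<in>{Suc 0..<Suc n}. x (i - 1)) \<in> measurable (PM {..<n}) (PM {Suc 0..<Suc n})"
    by (rule measurable_restrict) (auto intro!: measurable_component_singleton)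
  have pre: "(\<lambda>x. \<lambda>i\<in>{Suc 0..<Suc n}. x (i - 1)) -` Pi\<^sub>E {Suc 0..<Suc n} A \<inter> space (PM {..<n})
      = Pi\<^sub>E {..<n} (\<lambda>j. A (Suc j))"
  proof (intro equalityI subsetI)
    fix x assume xx: "x \<in> (\<lambda>x. \<lambda>i\<in>{Suc 0..<Suc n}. x (i - 1)) -` Pi\<^sub>E {Suc 0..<Suc n} A \<inter> space (PM {..<n})"
    then have x: "x \<in> space (PM {..<n})" "(\<lambda>i\<in>{Suc 0..<Suc n}. x (i - 1)) \<in> Pi\<^sub>E {Suc 0..<Suc n} A"
      by auto
    show "x \<in> Pi\<^sub>E {..<n} (\<lambda>j. A (Suc j))"
    proof (rule PiE_I)
      fix j assume "j \<in> {..<n}"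
      then have "Suc j \<in> {Suc 0..<Suc n}" by simp
      have "\<forall>i\<in>{Suc 0..<Suc n}. x (i - 1) \<in> A i" using x(2) by (auto simp: PiE_iff)
      from bspec[OF this \<open>Suc j \<in> _\<close>] show "x j \<in> A (Suc j)" by simp
    next
      fix j assume "j \<notin> {..<n}"
      then show "x j = undefined" using x(1) by (auto simp: space_PiM PiE_iff extensional_def)
    qed
  next
    fix x assume x: "x \<in> Pi\<^sub>E {..<n} (\<lambda>j. A (Suc j))"
    have "(\<lambda>i\<in>{Suc 0..<Suc n}. x (i - 1)) \<in> Pi\<^sub>E {Suc 0..<Suc n} A"
    proof (rule PiE_I)
      fix i assume i: "i \<in> {Suc 0..<Suc n}"
      then obtain j where j: "i = Suc j" "j < n" by (cases i) auto
      then show "(\<lambda>i\<in>{Suc 0..<Suc n}. x (i - 1)) i \<in> A i" using x i by (auto simp: PiE_iff)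
    qed auto
    moreover have "x \<in> space (PM {..<n})" using x by (auto simp: space_PiM PiE_iff)
    ultimately show "x \<in> (\<lambda>x. \<lambda>i\<in>{Suc 0..<Suc n}. x (i - 1)) -` Pi\<^sub>E {Suc 0..<Suc n} A \<inter> space (PM {..<n})"
      by simp
  qed
  have "emeasure (distr (PM {..<n}) (PM {Suc 0..<Suc n}) (\<lambda>x. \<lambda>i\<in>{Suc 0..<Suc n}. x (i - 1))) (Pi\<^sub>E {Suc 0..<Suc n} A)
      = emeasure (PM {..<n}) (Pi\<^sub>E {..<n} (\<lambda>j. A (Suc j)))"
  proof -
    have "emeasure (distr (PM {..<n}) (PM {Suc 0..<Suc n}) (\<lambda>x. \<lambda>i\<in>{Suc 0..<Suc n}. x (i - 1))) (Pi\<^sub>E {Suc 0..<Suc n} A)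
      = emeasure (PM {..<n}) ((\<lambda>x. \<lambda>i\<in>{Suc 0..<Suc n}. x (i - 1)) -` Pi\<^sub>E {Suc 0..<Suc n} A \<inter> space (PM {..<n}))"
      by (rule emeasure_distr[OF meas]) (use A in \<open>auto intro!: sets_PiM_I_finite\<close>)
    then show ?thesis by (simp only: pre)
  qed
  also have "\<dots> = (\<Prod>j<n. emeasure lborel (A (Suc j)))"
    using A by (intro PL.emeasure_PiM) auto
  also have "\<dots> = (\<Prod>i\<in>{Suc 0..<Suc n}. emeasure lborel (A i))"
    by (simp only: prod.shift_bounds_Suc_ivl lessThan_atLeast0)
  finally show "emeasure (distr (PM {..<n}) (PM {Suc 0..<Suc n}) (\<lambda>x. \<lambda>i\<in>{Suc 0..<Suc n}. x (i - 1))) (Pi\<^sub>E {Suc 0..<Suc n} A)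
      = (\<Prod>i\<in>{Suc 0..<Suc n}. emeasure lborel (A i))" .
qed

lemma enorm_split:
  assumes "0 < N"
  shows "enorm N z = sqrt ((z 0)^2 + (\<Sum>i\<in>{Suc 0..<N}. (z i)^2))"
  unfolding enorm_def using assms by (simp add: lessThan_atLeast0 sum.atLeast_Suc_lessThan)

definition Jp :: "(real \<Rightarrow> real) \<Rightarrow> real \<Rightarrow> real" where
  "Jp J t = J (max 0 t)"

lemma Jp_nonneg_arg: "t \<ge> 0 \<Longrightarrow> Jp J t = J t"
  unfolding Jp_def by simp

lemma Jstar_meas:
  assumes Jm[measurable]: "Jp J \<in> borel_measurable borel"
  shows "Jstar N J \<in> borel_measurable borel"
proof -
  have eq: "Jstar N J = (\<lambda>l. \<integral>\<^sup>+ x'. ennreal (Jp J (sqrt (l^2 + (enorm (N - 1) x')^2))) \<partial>RN (N - 1))"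
    unfolding Jstar_def Rn_def Jp_def by simp
  note [measurable (raw)] = sigma_finite_measure.borel_measurable_nn_integral[OF sigma_RN[of "{..<N - 1}"]]
  show ?thesis unfolding eq by measurable
qed

lemma Jstar_K:
  assumes N: "0 < N" and Jm[measurable]: "Jp J \<in> borel_measurable borel"
  shows "(\<integral>\<^sup>+ l. Jstar N J l * ennreal l * indicator {0..} l \<partial>lborel)
       = (\<integral>\<^sup>+ z. ennreal (J (enorm N z)) * ennreal (max 0 (- z 0)) \<partial>RN N)"
proof -
  obtain n where n: "N = Suc n" using N by (cases N) auto
  have Jsm[measurable]: "Jstar N J \<in> borel_measurable borel" by (rule Jstar_meas[OF Jm])
  have ins: "{..<N} = insert 0 {Suc 0..<Suc n}" using n by auto
  have em[measurable]: "(\<lambda>z. ennreal (J (enorm N z)) * ennreal (max 0 (- z 0))) \<in> borel_measurable (RN N)"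
  proof -
    have "(\<lambda>z. ennreal (J (enorm N z)) * ennreal (max 0 (- z 0))) = (\<lambda>z. ennreal (Jp J (enorm N z)) * ennreal (max 0 (- z 0)))"
      by (simp add: Jp_nonneg_arg enorm_nonneg)
    moreover have "(\<lambda>x. x 0) \<in> borel_measurable (RN N)"
      using N by (auto intro: measurable_component_singleton)
    ultimately show ?thesis by simp
  qed
  have "(\<integral>\<^sup>+ z. ennreal (J (enorm N z)) * ennreal (max 0 (- z 0)) \<partial>RN N)
      = (\<integral>\<^sup>+ y. (\<integral>\<^sup>+ x. ennreal (J (enorm N (x(0 := y)))) * ennreal (max 0 (- (x(0:=y)) 0)) \<partial>PM {Suc 0..<Suc n}) \<partial>lborel)"
    unfolding ins by (rule PL.product_nn_integral_insert_rev) (use em in \<open>auto simp: ins\<close>)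
  also have "\<dots> = (\<integral>\<^sup>+ y. Jstar N J y * ennreal (max 0 (- y)) \<partial>lborel)"
  proof (rule nn_integral_cong)
    fix y :: real
    define g where "g S = ennreal (Jp J (sqrt (y^2 + S)))" for S
    have gm[measurable]: "g \<in> borel_measurable borel" unfolding g_def by measurable
    have "(\<integral>\<^sup>+ x. ennreal (J (enorm N (x(0 := y)))) * ennreal (max 0 (- (x(0:=y)) 0)) \<partial>PM {Suc 0..<Suc n})
        = (\<integral>\<^sup>+ x. g (\<Sum>i\<in>{Suc 0..<Suc n}. (x i)^2) \<partial>PM {Suc 0..<Suc n}) * ennreal (max 0 (- y))"
    proof -
      have "(\<integral>\<^sup>+ x. ennreal (J (enorm N (x(0 := y)))) * ennreal (max 0 (- (x(0:=y)) 0)) \<partial>PM {Suc 0..<Suc n})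
          = (\<integral>\<^sup>+ x. g (\<Sum>i\<in>{Suc 0..<Suc n}. (x i)^2) * ennreal (max 0 (- y)) \<partial>PM {Suc 0..<Suc n})"
      proof (rule nn_integral_cong)
        fix x
        have "(\<Sum>i\<in>{Suc 0..<N}. ((x(0 := y)) i)^2) = (\<Sum>i\<in>{Suc 0..<Suc n}. (x i)^2)"
          using n by (intro sum.cong) auto
        then have en: "enorm N (x(0 := y)) = sqrt (y^2 + (\<Sum>i\<in>{Suc 0..<Suc n}. (x i)^2))"
          using enorm_split[OF N, of "x(0:=y)"] by simp
        have "sqrt (y^2 + (\<Sum>i\<in>{Suc 0..<Suc n}. (x i)^2)) \<ge> 0"
          by (intro real_sqrt_ge_zero add_nonneg_nonneg zero_le_power2 sum_nonneg)
        then have jeq: "Jp J (sqrt (y^2 + (\<Sum>i\<in>{Suc 0..<Suc n}. (x i)^2))) = J (sqrt (y^2 + (\<Sum>i\<in>{Suc 0..<Suc n}. (x i)^2)))"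
          by (rule Jp_nonneg_arg)
        show "ennreal (J (enorm N (x(0 := y)))) * ennreal (max 0 (- (x(0:=y)) 0))
            = g (\<Sum>i\<in>{Suc 0..<Suc n}. (x i)^2) * ennreal (max 0 (- y))"
          unfolding g_def jeq en by simp
      qed
      also have "\<dots> = (\<integral>\<^sup>+ x. g (\<Sum>i\<in>{Suc 0..<Suc n}. (x i)^2) \<partial>PM {Suc 0..<Suc n}) * ennreal (max 0 (- y))"
        by (rule nn_integral_multc) measurable
      finally show ?thesis .
    qed
    also have "(\<integral>\<^sup>+ x. g (\<Sum>i\<in>{Suc 0..<Suc n}. (x i)^2) \<partial>PM {Suc 0..<Suc n})
        = (\<integral>\<^sup>+ x. g (\<Sum>i\<in>{Suc 0..<Suc n}. ((\<lambda>i\<in>{Suc 0..<Suc n}. x (i - 1)) i)^2) \<partial>PM {..<n})"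
    proof -
      have meas: "(\<lambda>x. \<lambda>i\<in>{Suc 0..<Suc n}. x (i - 1)) \<in> measurable (PM {..<n}) (PM {Suc 0..<Suc n})"
        by (rule measurable_restrict) (auto intro!: measurable_component_singleton)
      have "(\<integral>\<^sup>+ x. g (\<Sum>i\<in>{Suc 0..<Suc n}. (x i)^2) \<partial>PM {Suc 0..<Suc n})
         = (\<integral>\<^sup>+ x. g (\<Sum>i\<in>{Suc 0..<Suc n}. (x i)^2) \<partial>distr (PM {..<n}) (PM {Suc 0..<Suc n}) (\<lambda>x. \<lambda>i\<in>{Suc 0..<Suc n}. x (i - 1)))"
        by (simp only: shift_PiM)
      also have "\<dots> = (\<integral>\<^sup>+ x. g (\<Sum>i\<in>{Suc 0..<Suc n}. ((\<lambda>i\<in>{Suc 0..<Suc n}. x (i - 1)) i)^2) \<partial>PM {..<n})"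
        by (rule nn_integral_distr[OF meas]) measurable
      finally show ?thesis .
    qed
    also have "\<dots> = Jstar N J y"
    proof -
      have "(\<Sum>i\<in>{Suc 0..<Suc n}. ((\<lambda>i\<in>{Suc 0..<Suc n}. x (i - 1)) i)^2) = (enorm n x)^2" for x
      proof -
        have "(\<Sum>i\<in>{Suc 0..<Suc n}. ((\<lambda>i\<in>{Suc 0..<Suc n}. x (i - 1)) i)^2) = (\<Sum>i\<in>{Suc 0..<Suc n}. (x (i - 1))^2)"
          by (intro sum.cong) auto
        also have "\<dots> = (\<Sum>j<n. (x j)^2)"
          by (simp only: sum.shift_bounds_Suc_ivl lessThan_atLeast0 diff_Suc_1)
        finally show ?thesis unfolding enorm_def by (simp add: sum_nonneg)
      qed
      then show ?thesis
        unfolding Jstar_def Rn_def g_def n by (simp add: Jp_nonneg_arg)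
    qed
    finally show "(\<integral>\<^sup>+ x. ennreal (J (enorm N (x(0 := y)))) * ennreal (max 0 (- (x(0:=y)) 0)) \<partial>PM {Suc 0..<Suc n})
        = Jstar N J y * ennreal (max 0 (- y))" .
  qed
  also have "\<dots> = ennreal \<bar>-1\<bar> * (\<integral>\<^sup>+ l. Jstar N J (0 + -1 * l) * ennreal (max 0 (- (0 + -1 * l))) \<partial>lborel)"
  proof (rule nn_integral_real_affine)
    have "Jstar N J \<in> borel_measurable borel" by (rule Jsm)
    then show "(\<lambda>x. Jstar N J x * ennreal (max 0 (- x))) \<in> borel_measurable borel" by measurable
  qed simp
  also have "\<dots> = (\<integral>\<^sup>+ l. Jstar N J l * ennreal l * indicator {0..} l \<partial>lborel)"
  proof -
    have "Jstar N J (- l) = Jstar N J l" for l unfolding Jstar_def by simp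
    then show ?thesis by (auto intro!: nn_integral_cong simp: max_def split: split_indicator)
  qed
  finally show ?thesis ..
qed

lemma A1:
  fixes r a s :: real
  assumes "0 \<le> r" "0 \<le> s"
  shows "sqrt ((r - a)^2 + s) \<le> r + sqrt (a^2 + s)"
proof -
  have n: "\<bar>a\<bar> \<le> sqrt (a^2 + s)"
    using assms real_sqrt_le_mono[of "a^2" "a^2 + s"] by simp
  have "(r - a)^2 + s \<le> (r + sqrt (a^2 + s))^2"
  proof -
    have "(r + sqrt (a^2 + s))^2 = r^2 + 2 * r * sqrt (a^2 + s) + (a^2 + s)"
      using assms by (simp add: power2_eq_square algebra_simps)
    moreover have "- a * r \<le> r * sqrt (a^2 + s)" using n assms
      by (metis abs_ge_minus_self mult.commute mult_right_mono order_trans)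
    ultimately show ?thesis by (simp add: power2_eq_square algebra_simps)
  qed
  moreover have "0 \<le> r + sqrt (a^2 + s)" using assms by simp
  ultimately show ?thesis by (intro real_le_lsqrt)
qed

lemma A2:
  fixes r a s R :: real
  assumes r: "0 \<le> r" and s: "0 \<le> s" and R: "R > 0" and nR: "sqrt (a^2 + s) < R"
    and dd: "R \<le> sqrt ((r - a)^2 + s)"
  shows "R + a - s / R \<le> r"
proof -
  have X: "0 \<le> (r - a)^2 + s" using s by simp
  have "R^2 \<le> (sqrt ((r - a)^2 + s))^2" using dd R by (intro power_mono) auto
  then have d2: "R^2 \<le> (r - a)^2 + s" using X by simp
  have Y: "0 \<le> a^2 + s" using s by simp
  have "(sqrt (a^2 + s))^2 < R^2" using nR Y by (intro power_strict_mono) auto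
  then have n2: "a^2 + s < R^2" using Y by simp
  have ra: "r - a \<ge> 0"
  proof (rule ccontr)
    assume "\<not> r - a \<ge> 0"
    then have "0 \<le> a - r" "a - r \<le> a" using r by auto
    then have "(a - r)^2 \<le> a^2" by (intro power_mono) auto
    then have "(r - a)^2 \<le> a^2" by (simp add: power2_commute)
    then show False using d2 n2 by linarith
  qed
  show ?thesis
  proof (rule ccontr)
    assume "\<not> R + a - s / R \<le> r"
    then have lt: "r - a < R - s / R" by linarith
    have "(r - a)^2 < (R - s/R)^2" using lt ra by (intro power_strict_mono) auto
    moreover have "(R - s/R)^2 \<le> R^2 - s"
    proof -
      have "(R - s/R)^2 = R^2 - 2 * s + (s/R)^2" using R by (simp add: power2_eq_square field_simps)
      moreover have "(s/R)^2 \<le> s"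
      proof -
        have "0 \<le> a^2" by simp
        then have "s \<le> R^2" using n2 by linarith
        then have "s * s \<le> s * R^2" using s by (simp add: mult_left_mono)
        then show ?thesis using R by (simp add: power2_eq_square field_simps)
      qed
      ultimately show ?thesis by linarith
    qed
    ultimately show False using d2 by linarith
  qed
qed

definition mr :: "(real \<Rightarrow> real \<Rightarrow> real) \<Rightarrow> real \<Rightarrow> real \<Rightarrow> real \<Rightarrow> ennreal" where
  "mr w R a s = (\<integral>\<^sup>+ r. ennreal (w r R) * indicator {0..R} r *
      indicator {r. R \<le> sqrt ((r - a)^2 + s)} r \<partial>lborel)"

definition Lb :: "nat \<Rightarrow> real \<Rightarrow> real \<Rightarrow> real" where
  "Lb N R b = (max 0 (1 - b / R))^(N - 1) * b"

definition Ub :: "real \<Rightarrow> real \<Rightarrow> real \<Rightarrow> real" where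
  "Ub R a s = (if sqrt (a^2 + s) < R then min (sqrt (a^2 + s)) (max 0 (- a + s / R)) else sqrt (a^2 + s))"

lemma mr_lower:
  assumes N: "2 \<le> N" and R: "R > 0" and s: "s \<ge> 0"
    and wlow: "\<And>r. 0 \<le> r \<Longrightarrow> r \<le> R \<Longrightarrow> (r / R)^(N - 1) \<le> w r R"
  shows "ennreal (Lb N R (max 0 (- a))) \<le> mr w R a s"
proof -
  define b where "b = max 0 (- a)"
  have b0: "b \<ge> 0" unfolding b_def by simp
  show ?thesis
  proof (cases "0 < b \<and> b < R")
    case False
    then have "b = 0 \<or> R \<le> b" using b0 by auto
    then have "Lb N R b = 0"
    proof
      assume "R \<le> b"
      then have "max 0 (1 - b / R) = 0" using R by (simp add: field_simps)
      then show ?thesis unfolding Lb_def using N by simp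
    qed (simp add: Lb_def)
    then show ?thesis unfolding b_def[symmetric] by simp
  next
    case True
    then have a: "a = - b" unfolding b_def by auto
    define c where "c = (1 - b / R)^(N - 1)"
    have c0: "c \<ge> 0" unfolding c_def using True by simp
    have "ennreal (Lb N R b) = ennreal c * emeasure lborel {R - b..R}"
      unfolding Lb_def c_def using True R
      by (simp add: ennreal_mult[symmetric] max_def)
    also have "\<dots> = (\<integral>\<^sup>+ r. ennreal c * indicator {R - b..R} r \<partial>lborel)"
      by (simp add: nn_integral_cmult_indicator)
    also have "\<dots> \<le> mr w R a s"
      unfolding mr_def
    proof (rule nn_integral_mono)
      fix r :: real
      show "ennreal c * indicator {R - b..R} r \<le> ennreal (w r R) * indicator {0..R} r *
          indicator {r. R \<le> sqrt ((r - a)^2 + s)} r"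
      proof (cases "r \<in> {R - b..R}")
        case True2: True
        then have r: "R - b \<le> r" "r \<le> R" by auto
        have r0: "0 \<le> r" using r True by linarith
        have "c \<le> (r / R)^(N - 1)"
          unfolding c_def
        proof (rule power_mono)
          have "(R - b) / R \<le> r / R" using r R by (intro divide_right_mono) auto
          then show "1 - b / R \<le> r / R" using R by (simp add: diff_divide_distrib)
          show "0 \<le> 1 - b / R" using True R by (simp add: field_simps)
        qed
        also have "\<dots> \<le> w r R" using wlow r0 r by simp
        finally have cw: "c \<le> w r R" .
        have "R \<le> r - a" using r a by simp
        then have "R^2 \<le> (r - a)^2" using R by (intro power_mono) auto
        then have "R \<le> sqrt ((r - a)^2 + s)"
          using s R by (intro real_le_rsqrt) auto
        then show ?thesis using cw True2 r0 r by (auto simp: ennreal_leI)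
      qed simp
    qed
    finally show ?thesis unfolding b_def .
  qed
qed

lemma Ub_nonneg: "s \<ge> 0 \<Longrightarrow> Ub R a s \<ge> 0"
  unfolding Ub_def by auto

lemma mr_upper:
  assumes R: "R > 0" and s: "s \<ge> 0"
    and wup: "\<And>r. 0 \<le> r \<Longrightarrow> r \<le> R \<Longrightarrow> w r R \<le> 1"
  shows "mr w R a s \<le> ennreal (Ub R a s)"
proof -
  define u where "u = Ub R a s"
  define n where "n = sqrt (a^2 + s)"
  have u0: "u \<ge> 0" unfolding u_def by (rule Ub_nonneg[OF s])
  have key: "R - u \<le> r" if r: "0 \<le> r" "r \<le> R" and d: "R \<le> sqrt ((r - a)^2 + s)" for r
  proof -
    have A: "R \<le> r + n" using A1[OF r(1) s, of a] d unfolding n_def by linarith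
    show ?thesis
    proof (cases "n < R")
      case False
      then have "u = n" unfolding u_def Ub_def n_def by simp
      then show ?thesis using A by simp
    next
      case True
      then have "u = min n (max 0 (- a + s / R))" unfolding u_def Ub_def n_def by simp
      moreover have "R + a - s / R \<le> r"
        using A2[OF r(1) s R _ d] True unfolding n_def by simp
      ultimately show ?thesis using A by (auto simp: min_def max_def)
    qed
  qed
  have "mr w R a s \<le> (\<integral>\<^sup>+ r. indicator {R - u..R} r \<partial>lborel)"
    unfolding mr_def
  proof (rule nn_integral_mono)
    fix r :: real
    show "ennreal (w r R) * indicator {0..R} r * indicator {r. R \<le> sqrt ((r - a)^2 + s)} r
        \<le> indicator {R - u..R} r"
    proof (cases "r \<in> {0..R} \<and> R \<le> sqrt ((r - a)^2 + s)")
      case True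
      then have "R - u \<le> r" using key by auto
      moreover have "w r R \<le> 1" using wup True by auto
      ultimately show ?thesis using True by (auto simp: ennreal_le_1)
    qed (auto split: split_indicator)
  qed
  also have "\<dots> = ennreal u" using u0 by simp
  finally show ?thesis unfolding u_def .
qed

lemma mono_at_top_tendsto:
  fixes f :: "real \<Rightarrow> ennreal"
  assumes mono: "\<And>x y. 0 < x \<Longrightarrow> x \<le> y \<Longrightarrow> f x \<le> f y"
    and lim: "(\<lambda>n. f (real (Suc n))) \<longlonglongrightarrow> K"
  shows "(f \<longlongrightarrow> K) at_top"
proof (rule order_tendstoI)
  have inc: "incseq (\<lambda>n. f (real (Suc n)))"
    by (rule incseq_SucI) (rule mono, auto)
  fix a assume "a < K"
  then have "eventually (\<lambda>n. a < f (real (Suc n))) sequentially" by (rule order_tendstoD(1)[OF lim])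
  then obtain n0 where n0: "a < f (real (Suc n0))" by (auto simp: eventually_sequentially)
  show "eventually (\<lambda>x. a < f x) at_top"
    unfolding eventually_at_top_linorder
  proof (rule exI[of _ "real (Suc n0)"], intro allI impI)
    fix x assume "x \<ge> real (Suc n0)"
    then have "f (real (Suc n0)) \<le> f x" by (intro mono) auto
    then show "a < f x" using n0 by (rule order.strict_trans2[rotated])
  qed
next
  have inc: "incseq (\<lambda>n. f (real (Suc n)))"
    by (rule incseq_SucI) (rule mono, auto)
  fix a assume "K < a"
  have "f x \<le> K" if x: "x \<ge> 1" for x
  proof -
    obtain m :: nat where "x < real m" using reals_Archimedean2[of x] by blast
    then have n: "x \<le> real (Suc m)" by simp
    have "f x \<le> f (real (Suc m))" using mono x n by auto
    also have "\<dots> \<le> K" by (rule incseq_le[OF inc lim])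
    finally show ?thesis .
  qed
  then show "eventually (\<lambda>x. f x < a) at_top"
    unfolding eventually_at_top_linorder using \<open>K < a\<close> by (auto intro: le_less_trans)
qed

lemma antimono_at_top_tendsto:
  fixes f :: "real \<Rightarrow> ennreal"
  assumes mono: "\<And>x y. 0 < x \<Longrightarrow> x \<le> y \<Longrightarrow> f y \<le> f x"
    and lim: "(\<lambda>n. f (real (Suc n))) \<longlonglongrightarrow> K"
  shows "(f \<longlongrightarrow> K) at_top"
proof (rule order_tendstoI)
  have dec: "decseq (\<lambda>n. f (real (Suc n)))"
    by (rule decseq_SucI) (rule mono, auto)
  fix a assume "a < K"
  have "K \<le> f x" if x: "x \<ge> 1" for x
  proof -
    obtain m :: nat where "x < real m" using reals_Archimedean2[of x] by blast
    then have n: "x \<le> real (Suc m)" by simp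
    have "K \<le> f (real (Suc m))" by (rule decseq_ge[OF dec lim])
    also have "\<dots> \<le> f x" using mono x n by auto
    finally show ?thesis .
  qed
  then show "eventually (\<lambda>x. a < f x) at_top"
    unfolding eventually_at_top_linorder using \<open>a < K\<close> by (auto intro: less_le_trans)
next
  fix a assume "K < a"
  then have "eventually (\<lambda>n. f (real (Suc n)) < a) sequentially" by (rule order_tendstoD(2)[OF lim])
  then obtain n0 where n0: "f (real (Suc n0)) < a" by (auto simp: eventually_sequentially)
  show "eventually (\<lambda>x. f x < a) at_top"
    unfolding eventually_at_top_linorder
  proof (rule exI[of _ "real (Suc n0)"], intro allI impI)
    fix x assume "x \<ge> real (Suc n0)"
    then have "f x \<le> f (real (Suc n0))" by (intro mono) auto
    then show "f x < a" using n0 by (rule order.strict_trans1)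
  qed
qed

lemma Lb_mono:
  assumes "0 < R" "R \<le> R'" "b \<ge> 0"
  shows "Lb N R b \<le> Lb N R' b"
  unfolding Lb_def
proof (rule mult_right_mono[OF power_mono])
  have "b / R' \<le> b / R" using assms by (intro divide_left_mono) auto
  then show "max 0 (1 - b / R) \<le> max 0 (1 - b / R')" by auto
qed (use assms in auto)

lemma Lb_nonneg: "b \<ge> 0 \<Longrightarrow> Lb N R b \<ge> 0"
  unfolding Lb_def by simp

lemma Lb_lim:
  assumes "b \<ge> 0"
  shows "(\<lambda>n. Lb N (real (Suc n)) b) \<longlonglongrightarrow> b"
proof -
  have "(\<lambda>n. b / real n) \<longlonglongrightarrow> 0" by (rule lim_const_over_n)
  then have "(\<lambda>n. b / real (Suc n)) \<longlonglongrightarrow> 0" by (rule LIMSEQ_Suc)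
  then have "(\<lambda>n. (max 0 (1 - b / real (Suc n)))^(N - 1) * b) \<longlonglongrightarrow> (max 0 (1 - 0))^(N - 1) * b"
    by (intro tendsto_intros)
  then show ?thesis unfolding Lb_def by simp
qed

lemma Ub_le: "s \<ge> 0 \<Longrightarrow> Ub R a s \<le> sqrt (a^2 + s)"
  unfolding Ub_def by auto

lemma Ub_mono:
  assumes "0 < R" "R \<le> R'" "s \<ge> 0"
  shows "Ub R' a s \<le> Ub R a s"
proof (cases "sqrt (a^2 + s) < R")
  case True
  then have T': "sqrt (a^2 + s) < R'" using assms by linarith
  have "s / R' \<le> s / R" using assms by (intro divide_left_mono) auto
  then have "max 0 (- a + s / R') \<le> max 0 (- a + s / R)" by auto
  then have "min (sqrt (a^2 + s)) (max 0 (- a + s / R')) \<le> min (sqrt (a^2 + s)) (max 0 (- a + s / R))"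
    by (rule min.mono[OF order_refl])
  then show ?thesis unfolding Ub_def using True T' by simp
next
  case False
  then show ?thesis using Ub_le[OF assms(3), of R' a] unfolding Ub_def by simp
qed

lemma Ub_lim:
  assumes s: "s \<ge> 0"
  shows "(\<lambda>n. Ub (real (Suc n)) a s) \<longlonglongrightarrow> max 0 (- a)"
proof -
  define n where "n = sqrt (a^2 + s)"
  have an: "- a \<le> n" unfolding n_def using s real_sqrt_le_mono[of "a^2" "a^2 + s"] by simp
  have n0: "0 \<le> n" unfolding n_def using s by simp
  have ev: "eventually (\<lambda>k. Ub (real (Suc k)) a s = min n (max 0 (- a + s / real (Suc k)))) sequentially"
  proof -
    obtain k0 :: nat where "n < k0" using reals_Archimedean2 by blast
    then show ?thesis unfolding Ub_def n_def[symmetric] eventually_sequentially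
      by (intro exI[of _ k0]) auto
  qed
  have "(\<lambda>k. s / real k) \<longlonglongrightarrow> 0" by (rule lim_const_over_n)
  then have "(\<lambda>k. s / real (Suc k)) \<longlonglongrightarrow> 0" by (rule LIMSEQ_Suc)
  then have "(\<lambda>k. min n (max 0 (- a + s / real (Suc k)))) \<longlonglongrightarrow> min n (max 0 (- a + 0))"
    by (intro tendsto_intros)
  moreover have "min n (max 0 (- a + 0)) = max 0 (- a)" using an n0 by auto
  ultimately have lim': "(\<lambda>k. min n (max 0 (- a + s / real (Suc k)))) \<longlonglongrightarrow> max 0 (- a)" by simp
  show ?thesis
    apply (rule Lim_transform_eventually[OF lim'])
    using ev by (auto elim: eventually_mono)
qed

definition sq :: "nat \<Rightarrow> (nat \<Rightarrow> real) \<Rightarrow> real" where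
  "sq N z = (\<Sum>i\<in>{Suc 0..<N}. (z i)^2)"

lemma sq_nonneg: "sq N z \<ge> 0" unfolding sq_def by (simp add: sum_nonneg)

lemma sq_meas[measurable]: "sq N \<in> borel_measurable (RN N)"
proof -
  have "(\<lambda>z. \<Sum>i\<in>{Suc 0..<N}. (z i)^2) \<in> borel_measurable (RN N)"
  proof (rule borel_measurable_sum)
    fix i assume "i \<in> {Suc 0..<N}"
    then have "(\<lambda>z. z i) \<in> borel_measurable (RN N)"
      by (auto intro: measurable_component_singleton)
    then show "(\<lambda>z. (z i)^2) \<in> borel_measurable (RN N)" by measurable
  qed
  then show ?thesis unfolding sq_def[abs_def] .
qed

lemma enorm_sq: "0 < N \<Longrightarrow> enorm N z = sqrt ((z 0)^2 + sq N z)"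
  unfolding sq_def by (rule enorm_split)

lemma enorm_cong: "(\<And>i. i < N \<Longrightarrow> x i = y i) \<Longrightarrow> enorm N x = enorm N y"
  unfolding enorm_def by (intro arg_cong[where f=sqrt] sum.cong) auto

lemma dd_formula:
  assumes "0 < N"
  shows "enorm N (\<lambda>i. pt N r i - z i) = sqrt ((r - z 0)^2 + sq N z)"
proof -
  have "enorm N (\<lambda>i. pt N r i - z i) = sqrt ((pt N r 0 - z 0)^2 + sq N (\<lambda>i. pt N r i - z i))"
    using enorm_sq[OF assms] .
  moreover have "pt N r 0 = r" using assms unfolding pt_def by simp
  moreover have "sq N (\<lambda>i. pt N r i - z i) = sq N z"
    unfolding sq_def pt_def by (intro sum.cong) auto
  ultimately show ?thesis by simp
qed

definition mw :: "(real \<Rightarrow> real \<Rightarrow> real) \<Rightarrow> nat \<Rightarrow> real \<Rightarrow> (nat \<Rightarrow> real) \<Rightarrow> ennreal" where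
  "mw w N R z = (\<integral>\<^sup>+ r. ennreal (w r R) * indicator {0..R} r *
      indicator {r. R \<le> sqrt ((r - z 0)^2 + sq N z)} r \<partial>lborel)"

lemma c0_meas: "0 < N \<Longrightarrow> (\<lambda>z. z 0) \<in> borel_measurable (RN N)"
  by (auto intro: measurable_component_singleton)

lemma Jp_enorm: "J (enorm N x) = Jp J (enorm N x)"
  by (simp add: Jp_nonneg_arg enorm_nonneg)

lemma inner_rep:
  assumes N: "0 < N" and Jm[measurable]: "Jp J \<in> borel_measurable borel" and R: "R > 0"
  shows "(\<integral>\<^sup>+ \<rho>. ennreal c * Jtilde N J r \<rho> * indicator {R..} \<rho> \<partial>lborel)
    = (\<integral>\<^sup>+ z. ennreal c * ennreal (J (enorm N z)) * indicator {z. R \<le> sqrt ((r - z 0)^2 + sq N z)} z \<partial>RN N)"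
proof -
  note c0_meas[OF N, measurable]
  define F where "F y = ennreal c * ennreal (Jp J (enorm N (\<lambda>i. pt N r i - y i))) * indicator {y. R \<le> enorm N y} y" for y
  define G where "G y = ennreal (Jp J (enorm N (\<lambda>i. pt N r i - y i)))" for y
  have Gm[measurable]: "G \<in> borel_measurable (RN N)"
  proof -
    have "G = (\<lambda>y. ennreal (Jp J (sqrt ((r - y 0)^2 + sq N y))))"
      unfolding G_def dd_formula[OF N] ..
    also have "\<dots> \<in> borel_measurable (RN N)" by measurable
    finally show ?thesis .
  qed
  have Fm[measurable]: "F \<in> borel_measurable (RN N)"
  proof -
    have "F = (\<lambda>y. ennreal c * G y * indicator {y. R \<le> enorm N y} y)"
      unfolding F_def G_def ..
    also have "\<dots> \<in> borel_measurable (RN N)" by measurable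
    finally show ?thesis .
  qed
  have "(\<integral>\<^sup>+ \<rho>. ennreal c * Jtilde N J r \<rho> * indicator {R..} \<rho> \<partial>lborel)
      = (\<integral>\<^sup>+ \<rho>. sphere_integral N \<rho> F \<partial>lborel)"
  proof (rule nn_integral_cong)
    fix \<rho> :: real
    show "ennreal c * Jtilde N J r \<rho> * indicator {R..} \<rho> = sphere_integral N \<rho> F"
    proof (cases "\<rho> > 0")
      case False
      then have "real N / \<rho> \<le> 0" by (simp add: divide_nonneg_nonpos)
      then show ?thesis using False R unfolding sphere_integral_def by (simp add: ennreal_eq_0_iff)
    next
      case rho: True
      define T where "T z = (\<lambda>i\<in>{..<N}. \<rho> * z i / enorm N z)" for z
      have "(\<integral>\<^sup>+ z. F (T z) * indicator {z. enorm N z < \<rho>} z \<partial>Rn N)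
          = (\<integral>\<^sup>+ z. (ennreal c * indicator {R..} \<rho>) * (ennreal (J (enorm N (\<lambda>i. pt N r i - T z i))) * indicator {z. enorm N z < \<rho>} z) \<partial>Rn N)"
        unfolding Rn_def
      proof (rule nn_integral_cong_AE)
        show "AE z in RN N. F (T z) * indicator {z. enorm N z < \<rho>} z
           = (ennreal c * indicator {R..} \<rho>) * (ennreal (J (enorm N (\<lambda>i. pt N r i - T z i))) * indicator {z. enorm N z < \<rho>} z)"
          using AE_enorm_nz[OF N]
        proof eventually_elim
          case (elim z)
          have e: "enorm N z > 0" using elim enorm_nonneg[of N z] by linarith
          have eq: "T z = (\<lambda>i\<in>{..<N}. (\<rho> / enorm N z) * z i)"
            unfolding T_def by (rule restrict_ext) simp
          have n: "enorm N (T z) = \<rho>"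
            unfolding eq enorm_scale using e rho by simp
          show ?case unfolding F_def
            by (simp add: n Jp_enorm[symmetric] ac_simps split: split_indicator)
        qed
      qed
      also have "\<dots> = (ennreal c * indicator {R..} \<rho>) * (\<integral>\<^sup>+ z. ennreal (J (enorm N (\<lambda>i. pt N r i - T z i))) * indicator {z. enorm N z < \<rho>} z \<partial>Rn N)"
      proof (rule nn_integral_cmult)
        have Tm[measurable]: "T \<in> measurable (RN N) (RN N)"
          unfolding T_def
        proof (rule measurable_restrict)
          fix i assume "i \<in> {..<N}"
          then have [measurable]: "(\<lambda>x. x i) \<in> borel_measurable (RN N)"
            using measurable_component_singleton[of i "{..<N}" "\<lambda>_. lborel::real measure"] by simp
          show "(\<lambda>x. \<rho> * x i / enorm N x) \<in> measurable (RN N) lborel" by measurable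
        qed
        have "(\<lambda>z. ennreal (J (enorm N (\<lambda>i. pt N r i - T z i))) * indicator {z. enorm N z < \<rho>} z)
            = (\<lambda>z. G (T z) * indicator {z. enorm N z < \<rho>} z)"
          unfolding G_def by (simp add: Jp_enorm[symmetric])
        also have "\<dots> \<in> borel_measurable (RN N)" by measurable
        finally show "(\<lambda>z. ennreal (J (enorm N (\<lambda>i. pt N r i - T z i))) * indicator {z. enorm N z < \<rho>} z) \<in> borel_measurable (Rn N)"
          unfolding Rn_def .
      qed
      finally have I: "(\<integral>\<^sup>+ z. F (T z) * indicator {z. enorm N z < \<rho>} z \<partial>Rn N) = \<dots>" .
      show ?thesis
        unfolding sphere_integral_def Jtilde_def I T_def[symmetric] by (simp add: ac_simps)
    qed
  qed
  also have "\<dots> = (\<integral>\<^sup>+ y. F y \<partial>RN N)"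
    by (rule polar[OF N Fm, symmetric])
  also have "\<dots> = (\<integral>\<^sup>+ z. F (\<lambda>i\<in>{..<N}. pt N r i + -1 * z i) \<partial>RN N)"
    using affine_PiM[OF _ _ Fm, of "-1" "pt N r"] by simp
  also have "\<dots> = (\<integral>\<^sup>+ z. ennreal c * ennreal (J (enorm N z)) * indicator {z. R \<le> sqrt ((r - z 0)^2 + sq N z)} z \<partial>RN N)"
  proof (rule nn_integral_cong)
    fix z
    have e1: "enorm N (\<lambda>i. pt N r i - (\<lambda>i\<in>{..<N}. pt N r i + -1 * z i) i) = enorm N z"
      by (rule enorm_cong) simp
    have e2: "enorm N (\<lambda>i\<in>{..<N}. pt N r i + -1 * z i) = enorm N (\<lambda>i. pt N r i - z i)"
      by (rule enorm_cong) simp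
    show "F (\<lambda>i\<in>{..<N}. pt N r i + -1 * z i) = ennreal c * ennreal (J (enorm N z)) * indicator {z. R \<le> sqrt ((r - z 0)^2 + sq N z)} z"
    proof -
      have e3: "enorm N (\<lambda>i\<in>{..<N}. pt N r i - z i) = sqrt ((r - z 0)^2 + sq N z)"
        using dd_formula[OF N, of r z] by (metis (no_types, lifting) enorm_cong restrict_apply' lessThan_iff)
      show ?thesis
        unfolding F_def e1 by (simp add: e3 Jp_enorm[of J N z, symmetric] split: split_indicator)
    qed
  qed
  finally show ?thesis .
qed

lemma mw_integrand_meas:
  assumes wm[measurable]: "(\<lambda>r. w r R) \<in> borel_measurable borel"
  shows "(\<lambda>r. ennreal (w r R) * indicator {0..R} r * indicator {r. R \<le> sqrt ((r - a)^2 + b)} r) \<in> borel_measurable lborel"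
proof -
  have "{r. R \<le> sqrt ((r - a)^2 + b)} \<in> sets borel" by measurable
  then show ?thesis by measurable
qed

lemma dbl_rep:
  assumes N: "0 < N" and Jm[measurable]: "Jp J \<in> borel_measurable borel" and R: "R > 0"
    and wm[measurable]: "(\<lambda>r. w r R) \<in> borel_measurable borel"
  shows "dbl N J w R = (\<integral>\<^sup>+ z. ennreal (J (enorm N z)) * mw w N R z \<partial>RN N)"
proof -
  note c0_meas[OF N, measurable]
  interpret P: pair_sigma_finite lborel "RN N"
    by (intro pair_sigma_finite.intro lborel.sigma_finite_measure_axioms sigma_RN) simp
  define H where "H r z = ennreal (w r R) * indicator {0..R} r *
      indicator {r. R \<le> sqrt ((r - z 0)^2 + sq N z)} r * ennreal (Jp J (enorm N z))" for r z
  have Hm: "(\<lambda>(r, z). H r z) \<in> borel_measurable (lborel \<Otimes>\<^sub>M RN N)"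
  proof -
    have [measurable]: "Measurable.pred (lborel \<Otimes>\<^sub>M RN N) (\<lambda>x. fst x \<in> {r. R \<le> sqrt ((r - snd x 0)^2 + sq N (snd x))})"
      by simp measurable
    show ?thesis unfolding H_def by measurable
  qed
  have "dbl N J w R = (\<integral>\<^sup>+ r. (\<integral>\<^sup>+ z. ennreal (w r R) * ennreal (J (enorm N z)) *
      indicator {z. R \<le> sqrt ((r - z 0)^2 + sq N z)} z \<partial>RN N) * indicator {0..R} r \<partial>lborel)"
    unfolding dbl_def by (simp only: inner_rep[OF N Jm R])
  also have "\<dots> = (\<integral>\<^sup>+ r. (\<integral>\<^sup>+ z. H r z \<partial>RN N) \<partial>lborel)"
  proof (rule nn_integral_cong)
    fix r :: real
    have "(\<integral>\<^sup>+ z. ennreal (w r R) * ennreal (J (enorm N z)) *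
      indicator {z. R \<le> sqrt ((r - z 0)^2 + sq N z)} z \<partial>RN N) * indicator {0..R} r
      = (\<integral>\<^sup>+ z. ennreal (w r R) * ennreal (J (enorm N z)) *
      indicator {z. R \<le> sqrt ((r - z 0)^2 + sq N z)} z * indicator {0..R} r \<partial>RN N)"
    proof (rule nn_integral_multc[symmetric])
      have "(\<lambda>z. ennreal (w r R) * ennreal (J (enorm N z)) * indicator {z. R \<le> sqrt ((r - z 0)^2 + sq N z)} z)
        = (\<lambda>z. ennreal (w r R) * ennreal (Jp J (enorm N z)) * indicator {z. R \<le> sqrt ((r - z 0)^2 + sq N z)} z)"
        by (simp add: Jp_enorm[symmetric])
      also have "\<dots> \<in> borel_measurable (RN N)" by measurable
      finally show "(\<lambda>z. ennreal (w r R) * ennreal (J (enorm N z)) * indicator {z. R \<le> sqrt ((r - z 0)^2 + sq N z)} z)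
         \<in> borel_measurable (RN N)" .
    qed
    also have "\<dots> = (\<integral>\<^sup>+ z. H r z \<partial>RN N)"
      unfolding H_def by (intro nn_integral_cong) (simp add: Jp_enorm[symmetric] ac_simps split: split_indicator)
    finally show "(\<integral>\<^sup>+ z. ennreal (w r R) * ennreal (J (enorm N z)) *
      indicator {z. R \<le> sqrt ((r - z 0)^2 + sq N z)} z \<partial>RN N) * indicator {0..R} r = (\<integral>\<^sup>+ z. H r z \<partial>RN N)" .
  qed
  also have "\<dots> = (\<integral>\<^sup>+ z. (\<integral>\<^sup>+ r. H r z \<partial>lborel) \<partial>RN N)"
    by (rule P.Fubini'[symmetric, OF Hm])
  also have "\<dots> = (\<integral>\<^sup>+ z. ennreal (J (enorm N z)) * mw w N R z \<partial>RN N)"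
  proof (rule nn_integral_cong)
    fix z
    have "(\<integral>\<^sup>+ r. H r z \<partial>lborel) = mw w N R z * ennreal (Jp J (enorm N z))"
      unfolding H_def mw_def
      by (rule nn_integral_multc[OF mw_integrand_meas[of w R, OF wm]])
    then show "(\<integral>\<^sup>+ r. H r z \<partial>lborel) = ennreal (J (enorm N z)) * mw w N R z"
      by (simp add: Jp_enorm[symmetric] mult.commute)
  qed
  finally show ?thesis .
qed

lemma abs_le_enorm: "i < N \<Longrightarrow> \<bar>z i\<bar> \<le> enorm N z"
proof -
  assume i: "i < N"
  have "(z i)^2 \<le> (\<Sum>j<N. (z j)^2)"
    using i by (intro member_le_sum) auto
  then have "sqrt ((z i)^2) \<le> enorm N z" unfolding enorm_def by (rule real_sqrt_le_mono)
  then show ?thesis by simp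
qed

lemma EU_finite: "emeasure (RN N) (space (RN N) \<inter> {z. enorm N z < 1}) < \<infinity>"
proof -
  have "space (RN N) \<inter> {z. enorm N z < 1} \<subseteq> Pi\<^sub>E {..<N} (\<lambda>_. {-1..1})"
  proof
    fix z assume z: "z \<in> space (RN N) \<inter> {z. enorm N z < 1}"
    show "z \<in> Pi\<^sub>E {..<N} (\<lambda>_. {-1..1})"
    proof (rule PiE_I)
      fix i assume "i \<in> {..<N}"
      then have "\<bar>z i\<bar> \<le> enorm N z" by (intro abs_le_enorm) auto
      then show "z i \<in> {-1..1}" using z by auto
    next
      fix i assume "i \<notin> {..<N}"
      then show "z i = undefined" using z by (auto simp: space_PiM PiE_iff extensional_def)
    qed
  qed
  then have "emeasure (RN N) (space (RN N) \<inter> {z. enorm N z < 1}) \<le> emeasure (RN N) (Pi\<^sub>E {..<N} (\<lambda>_. {-1..1}))"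
    by (intro emeasure_mono) (auto intro!: sets_PiM_I_finite)
  also have "\<dots> = (\<Prod>i<N. emeasure lborel {-1..1::real})"
    by (rule PL.emeasure_PiM) auto
  also have "\<dots> < \<infinity>" by (simp add: power_less_top_ennreal)
  finally show ?thesis .
qed

definition Cset :: "nat \<Rightarrow> (nat \<Rightarrow> real) set" where
  "Cset N = {z \<in> space (RN N). enorm N z \<le> 2 * (- z 0)}"

lemma Cset_sets: "0 < N \<Longrightarrow> Cset N \<in> sets (RN N)"
  unfolding Cset_def using c0_meas[of N] by measurable

lemma Cset_cone:
  assumes N: "0 < N" and t: "t > 0" and z: "z \<in> space (RN N)"
  shows "(\<lambda>i\<in>{..<N}. t * z i) \<in> Cset N \<longleftrightarrow> z \<in> Cset N"
proof -
  have sp: "(\<lambda>i\<in>{..<N}. t * z i) \<in> space (RN N)" by (simp add: space_PiM)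
  have "enorm N (\<lambda>i\<in>{..<N}. t * z i) = t * enorm N z" using t by (simp add: enorm_scale)
  moreover have "(\<lambda>i\<in>{..<N}. t * z i) 0 = t * z 0" using N by simp
  moreover have "t * enorm N z \<le> 2 * (- (t * z 0)) \<longleftrightarrow> enorm N z \<le> 2 * (- z 0)"
  proof -
    have eq: "2 * (- (t * z 0)) = t * (2 * (- z 0))" by (simp add: algebra_simps)
    show ?thesis unfolding eq using t by (rule mult_le_cancel_left_pos)
  qed
  ultimately show ?thesis unfolding Cset_def using sp z by auto
qed

lemma EC_pos:
  assumes N: "0 < N"
  shows "0 < emeasure (RN N) (Cset N \<inter> {z. enorm N z < 1})"
proof -
  define e :: real where "e = 1 / (4 * N)"
  have e0: "e > 0" unfolding e_def using N by simp
  define B where "B = Pi\<^sub>E {..<N} (\<lambda>i. if i = 0 then {-3/5<..<-2/5::real} else {-e<..<e})"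
  have sub: "B \<subseteq> Cset N \<inter> {z. enorm N z < 1}"
  proof
    fix z assume z: "z \<in> B"
    have "z 0 \<in> (if (0::nat) = 0 then {-3/5<..<-2/5::real} else {-e<..<e})"
      using z N unfolding B_def PiE_iff by blast
    then have z0: "-3/5 < z 0" "z 0 < -2/5" by auto
    have zi: "\<bar>z i\<bar> < e" if i: "i \<in> {Suc 0..<N}" for i
    proof -
      have all: "\<forall>j\<in>{..<N}. z j \<in> (if j = 0 then {-3/5<..<-2/5::real} else {-e<..<e})"
        using z unfolding B_def PiE_iff by blast
      have iN: "i \<in> {..<N}" and i0: "i \<noteq> 0" using i by auto
      have "z i \<in> (if i = 0 then {-3/5<..<-2/5::real} else {-e<..<e})" using bspec[OF all iN] .
      then have "z i \<in> {-e<..<e}" using i0 by simp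
      then show ?thesis by auto
    qed
    have "sq N z \<le> (\<Sum>i\<in>{Suc 0..<N}. e^2)"
      unfolding sq_def
    proof (rule sum_mono)
      fix i assume "i \<in> {Suc 0..<N}"
      then have "\<bar>z i\<bar> \<le> e" using zi by (simp add: less_imp_le)
      then have "\<bar>z i\<bar>^2 \<le> e^2" by (intro power_mono) auto
      then show "(z i)^2 \<le> e^2" by simp
    qed
    also have "\<dots> = real (N - 1) * e^2" by simp
    also have "\<dots> \<le> real N * e^2" by (intro mult_right_mono) auto
    also have "\<dots> = 1 / (16 * N)" unfolding e_def using N by (simp add: power2_eq_square field_simps)
    also have "\<dots> \<le> 1 / 16" using N by (simp add: field_simps)
    finally have sqb: "sq N z \<le> 1/16" .
    have "(z 0)^2 < (3/5)^2"
    proof -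
      have "\<bar>z 0\<bar> < 3/5" using z0 by simp
      then have "\<bar>z 0\<bar>^2 < (3/5)^2" by (intro power_strict_mono) auto
      then show ?thesis by simp
    qed
    then have "(z 0)^2 + sq N z < (4/5)^2" using sqb by (simp add: power2_eq_square)
    then have "enorm N z < 4/5" unfolding enorm_sq[OF N]
      by (metis real_sqrt_less_iff real_sqrt_pow2_iff zero_le_numeral divide_nonneg_nonneg zero_le_power2 power2_eq_square real_sqrt_abs abs_of_nonneg)
    moreover have "z \<in> space (RN N)" using z unfolding B_def by (auto simp: space_PiM PiE_iff)
    ultimately show "z \<in> Cset N \<inter> {z. enorm N z < 1}" using z0 unfolding Cset_def by auto
  qed
  have Bm: "emeasure (RN N) B = (\<Prod>i<N. emeasure lborel (if i = 0 then {-3/5<..<-2/5::real} else {-e<..<e}))"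
    unfolding B_def by (rule PL.emeasure_PiM) auto
  have "emeasure (RN N) B \<noteq> 0"
    unfolding Bm using e0 by (auto simp: prod_zero_iff)
  moreover have "emeasure (RN N) B \<le> emeasure (RN N) (Cset N \<inter> {z. enorm N z < 1})"
  proof (rule emeasure_mono[OF sub])
    have "Cset N \<inter> {z. enorm N z < 1} = Cset N \<inter> {z \<in> space (RN N). enorm N z < 1}"
      unfolding Cset_def by auto
    then show "Cset N \<inter> {z. enorm N z < 1} \<in> sets (RN N)" using Cset_sets[OF N] by simp
  qed
  ultimately show ?thesis using not_gr_zero order.strict_trans2 by blast
qed

definition Kint :: "nat \<Rightarrow> (real \<Rightarrow> real) \<Rightarrow> ennreal" where
  "Kint N J = (\<integral>\<^sup>+ z. ennreal (J (enorm N z)) * ennreal (max 0 (- z 0)) \<partial>RN N)"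

definition I1 :: "nat \<Rightarrow> (real \<Rightarrow> real) \<Rightarrow> ennreal" where
  "I1 N J = (\<integral>\<^sup>+ r. ennreal (J r * r ^ N) * indicator {0..} r \<partial>lborel)"

definition Inorm :: "nat \<Rightarrow> (real \<Rightarrow> real) \<Rightarrow> ennreal" where
  "Inorm N J = (\<integral>\<^sup>+ z. ennreal (J (enorm N z)) * ennreal (enorm N z) \<partial>RN N)"

lemma radial_phi:
  assumes N: "0 < N" and Jnn: "\<forall>r\<ge>0. J r \<ge> 0"
  shows "(\<integral>\<^sup>+ r. ennreal (Jp J r * r) * ennreal (r ^ (N - 1)) * indicator {0<..} r \<partial>lborel) = I1 N J"
  unfolding I1_def
proof (rule nn_integral_cong)
  fix r :: real
  show "ennreal (Jp J r * r) * ennreal (r ^ (N - 1)) * indicator {0<..} r = ennreal (J r * r ^ N) * indicator {0..} r"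
  proof (cases "r > 0")
    case True
    have "r * r ^ (N - 1) = r ^ N" using N by (simp add: power_eq_if)
    then have "Jp J r * r * r ^ (N - 1) = J r * r ^ N" using True by (simp add: Jp_nonneg_arg mult.assoc)
    moreover have "Jp J r * r \<ge> 0" using True Jnn by (simp add: Jp_nonneg_arg)
    ultimately show ?thesis using True by (simp add: ennreal_mult[symmetric])
  next
    case False
    then show ?thesis using N by (cases "r = 0") (auto simp: zero_power)
  qed
qed

lemma Inorm_eq:
  assumes N: "0 < N" and Jm[measurable]: "Jp J \<in> borel_measurable borel" and Jnn: "\<forall>r\<ge>0. J r \<ge> 0"
  shows "Inorm N J = ennreal (real N) * emeasure (RN N) (space (RN N) \<inter> {z. enorm N z < 1}) * I1 N J"
proof -
  have "Inorm N J = (\<integral>\<^sup>+ z. ennreal (Jp J (enorm N z) * enorm N z) * indicator (space (RN N)) z \<partial>RN N)"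
    unfolding Inorm_def
    by (intro nn_integral_cong) (simp add: Jp_nonneg_arg enorm_nonneg ennreal_mult Jnn)
  also have "\<dots> = ennreal (real N) * emeasure (RN N) (space (RN N) \<inter> {z. enorm N z < 1}) *
      (\<integral>\<^sup>+ r. ennreal (Jp J r * r) * ennreal (r ^ (N - 1)) * indicator {0<..} r \<partial>lborel)"
    by (rule cone_radial[OF N]) (auto simp: space_PiM)
  finally show ?thesis using radial_phi[OF N Jnn] by simp
qed

lemma Kint_le_Inorm:
  assumes N: "0 < N" shows "Kint N J \<le> Inorm N J"
  unfolding Kint_def Inorm_def
proof (rule nn_integral_mono)
  fix z
  have "max 0 (- z 0) \<le> enorm N z"
    using abs_le_enorm[of 0 N z] N by auto
  then show "ennreal (J (enorm N z)) * ennreal (max 0 (- z 0)) \<le> ennreal (J (enorm N z)) * ennreal (enorm N z)"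
    by (intro mult_left_mono ennreal_leI) auto
qed

lemma I1_le_Kint:
  assumes N: "0 < N" and Jm[measurable]: "Jp J \<in> borel_measurable borel" and Jnn: "\<forall>r\<ge>0. J r \<ge> 0"
  shows "ennreal (real N) * emeasure (RN N) (Cset N \<inter> {z. enorm N z < 1}) * I1 N J \<le> 2 * Kint N J"
proof -
  have "ennreal (real N) * emeasure (RN N) (Cset N \<inter> {z. enorm N z < 1}) * I1 N J
      = (\<integral>\<^sup>+ z. ennreal (Jp J (enorm N z) * enorm N z) * indicator (Cset N) z \<partial>RN N)"
  proof -
    have "(\<integral>\<^sup>+ z. ennreal (Jp J (enorm N z) * enorm N z) * indicator (Cset N) z \<partial>RN N)
      = ennreal (real N) * emeasure (RN N) (Cset N \<inter> {z. enorm N z < 1}) *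
        (\<integral>\<^sup>+ r. ennreal (Jp J r * r) * ennreal (r ^ (N - 1)) * indicator {0<..} r \<partial>lborel)"
      by (rule cone_radial[OF N Cset_sets[OF N]]) (use Cset_cone[OF N] in auto)
    then show ?thesis unfolding radial_phi[OF N Jnn] by simp
  qed
  also have "\<dots> \<le> (\<integral>\<^sup>+ z. 2 * (ennreal (J (enorm N z)) * ennreal (max 0 (- z 0))) \<partial>RN N)"
  proof (rule nn_integral_mono)
    fix z
    show "ennreal (Jp J (enorm N z) * enorm N z) * indicator (Cset N) z \<le> 2 * (ennreal (J (enorm N z)) * ennreal (max 0 (- z 0)))"
    proof (cases "z \<in> Cset N")
      case True
      then have "enorm N z \<le> 2 * max 0 (- z 0)" unfolding Cset_def by auto
      moreover have "J (enorm N z) \<ge> 0" using Jnn enorm_nonneg[of N z] by auto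
      ultimately have "J (enorm N z) * enorm N z \<le> 2 * (J (enorm N z) * max 0 (- z 0))"
        by (metis mult.left_commute mult_left_mono)
      then have "ennreal (J (enorm N z) * enorm N z) \<le> ennreal (2 * (J (enorm N z) * max 0 (- z 0)))"
        by (rule ennreal_leI)
      then show ?thesis using True \<open>J (enorm N z) \<ge> 0\<close>
        by (simp add: Jp_nonneg_arg enorm_nonneg ennreal_mult)
    qed simp
  qed
  also have "\<dots> = 2 * Kint N J"
    unfolding Kint_def
  proof (rule nn_integral_cmult)
    show "(\<lambda>z. ennreal (J (enorm N z)) * ennreal (max 0 (- z 0))) \<in> borel_measurable (RN N)"
    proof -
      note c0_meas[OF N, measurable]
      have "(\<lambda>z. ennreal (J (enorm N z)) * ennreal (max 0 (- z 0))) = (\<lambda>z. ennreal (Jp J (enorm N z)) * ennreal (max 0 (- z 0)))"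
        by (simp add: Jp_enorm[symmetric])
      also have "\<dots> \<in> borel_measurable (RN N)" by measurable
      finally show ?thesis .
    qed
  qed
  finally show ?thesis .
qed

lemma finite_equiv:
  assumes N: "0 < N" and Jm: "Jp J \<in> borel_measurable borel" and Jnn: "\<forall>r\<ge>0. J r \<ge> 0"
  shows "Kint N J < \<infinity> \<longleftrightarrow> I1 N J < \<infinity>"
    and "I1 N J < \<infinity> \<Longrightarrow> Inorm N J < \<infinity>"
proof -
  show fin: "I1 N J < \<infinity> \<Longrightarrow> Inorm N J < \<infinity>"
    unfolding Inorm_eq[OF N Jm Jnn] using EU_finite[of N]
    by (simp add: ennreal_mult_less_top)
  show "Kint N J < \<infinity> \<longleftrightarrow> I1 N J < \<infinity>"
  proof
    assume "Kint N J < \<infinity>"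
    then have "2 * Kint N J < \<infinity>" by (simp add: ennreal_mult_less_top)
    then have "ennreal (real N) * emeasure (RN N) (Cset N \<inter> {z. enorm N z < 1}) * I1 N J < \<infinity>"
      using I1_le_Kint[OF N Jm Jnn] by (rule le_less_trans[rotated])
    moreover have "ennreal (real N) * emeasure (RN N) (Cset N \<inter> {z. enorm N z < 1}) \<noteq> 0"
      using EC_pos[OF N] N by simp
    ultimately show "I1 N J < \<infinity>" by (auto simp: ennreal_mult_less_top)
  next
    assume "I1 N J < \<infinity>"
    then have "Inorm N J < \<infinity>" by (rule fin)
    then show "Kint N J < \<infinity>" using Kint_le_Inorm[OF N, of J] by (rule le_less_trans[rotated])
  qed
qed

definition Lw :: "nat \<Rightarrow> (real \<Rightarrow> real) \<Rightarrow> real \<Rightarrow> ennreal" where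
  "Lw N J R = (\<integral>\<^sup>+ z. ennreal (J (enorm N z) * Lb N R (max 0 (- z 0))) \<partial>RN N)"

definition Uw :: "nat \<Rightarrow> (real \<Rightarrow> real) \<Rightarrow> real \<Rightarrow> ennreal" where
  "Uw N J R = (\<integral>\<^sup>+ z. ennreal (J (enorm N z) * Ub R (z 0) (sq N z)) \<partial>RN N)"

lemma Jenorm_nn: "\<forall>r\<ge>0. J r \<ge> 0 \<Longrightarrow> J (enorm N z) \<ge> 0"
  using enorm_nonneg[of N z] by auto

lemma dbl_bounds:
  assumes N: "2 \<le> N" and Jm[measurable]: "Jp J \<in> borel_measurable borel" and Jnn: "\<forall>r\<ge>0. J r \<ge> 0"
    and R: "R > 0" and wm: "(\<lambda>r. w r R) \<in> borel_measurable borel"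
    and wlow: "\<And>r. 0 \<le> r \<Longrightarrow> r \<le> R \<Longrightarrow> (r / R)^(N - 1) \<le> w r R"
    and wup: "\<And>r. 0 \<le> r \<Longrightarrow> r \<le> R \<Longrightarrow> w r R \<le> 1"
  shows "Lw N J R \<le> dbl N J w R" "dbl N J w R \<le> Uw N J R"
proof -
  have N0: "0 < N" using N by simp
  have rep: "dbl N J w R = (\<integral>\<^sup>+ z. ennreal (J (enorm N z)) * mr w R (z 0) (sq N z) \<partial>RN N)"
    unfolding dbl_rep[where N=N and J=J and R=R and w=w, OF N0 Jm R wm] mw_def mr_def ..
  show "Lw N J R \<le> dbl N J w R"
    unfolding rep Lw_def
  proof (rule nn_integral_mono)
    fix z
    have "ennreal (Lb N R (max 0 (- z 0))) \<le> mr w R (z 0) (sq N z)"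
      by (rule mr_lower[where w=w and R=R and N=N and a="z 0" and s="sq N z", OF N R sq_nonneg wlow])
    then have "ennreal (J (enorm N z)) * ennreal (Lb N R (max 0 (- z 0))) \<le> ennreal (J (enorm N z)) * mr w R (z 0) (sq N z)"
      by (rule mult_left_mono) simp
    moreover have "ennreal (J (enorm N z) * Lb N R (max 0 (- z 0))) = ennreal (J (enorm N z)) * ennreal (Lb N R (max 0 (- z 0)))"
      using Jenorm_nn[OF Jnn, of N z] Lb_nonneg[of "max 0 (- z 0)" N R] by (simp add: ennreal_mult)
    ultimately show "ennreal (J (enorm N z) * Lb N R (max 0 (- z 0))) \<le> ennreal (J (enorm N z)) * mr w R (z 0) (sq N z)"
      by simp
  qed
  show "dbl N J w R \<le> Uw N J R"
    unfolding rep Uw_def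
  proof (rule nn_integral_mono)
    fix z
    have "mr w R (z 0) (sq N z) \<le> ennreal (Ub R (z 0) (sq N z))"
      by (rule mr_upper[where w=w and R=R and a="z 0" and s="sq N z", OF R sq_nonneg wup])
    then show "ennreal (J (enorm N z)) * mr w R (z 0) (sq N z) \<le> ennreal (J (enorm N z) * Ub R (z 0) (sq N z))"
      using Jenorm_nn[OF Jnn] Ub_nonneg[OF sq_nonneg] by (simp add: ennreal_mult mult_left_mono)
  qed
qed

lemma Lw_tendsto:
  assumes N: "2 \<le> N" and Jm[measurable]: "Jp J \<in> borel_measurable borel" and Jnn: "\<forall>r\<ge>0. J r \<ge> 0"
  shows "(Lw N J \<longlongrightarrow> Kint N J) at_top"
proof (rule mono_at_top_tendsto)
  have N0: "0 < N" using N by simp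
  note c0_meas[OF N0, measurable]
  fix x y :: real assume "0 < x" "x \<le> y"
  then show "Lw N J x \<le> Lw N J y"
    unfolding Lw_def using Jenorm_nn[OF Jnn]
    by (intro nn_integral_mono ennreal_leI mult_left_mono Lb_mono) auto
next
  have N0: "0 < N" using N by simp
  note c0_meas[OF N0, measurable]
  define f where "f n z = ennreal (J (enorm N z) * Lb N (real (Suc n)) (max 0 (- z 0)))" for n z
  have fm: "f n \<in> borel_measurable (RN N)" for n
  proof -
    have "f n = (\<lambda>z. ennreal (Jp J (enorm N z) * ((max 0 (1 - max 0 (- z 0) / real (Suc n)))^(N - 1) * max 0 (- z 0))))"
      unfolding f_def Lb_def by (simp add: Jp_enorm[symmetric])
    also have "\<dots> \<in> borel_measurable (RN N)" by measurable
    finally show ?thesis .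
  qed
  have inc: "incseq f"
    unfolding f_def using Jenorm_nn[OF Jnn]
    by (intro incseq_SucI le_funI ennreal_leI mult_left_mono Lb_mono) auto
  have sup: "(SUP n. f n z) = ennreal (J (enorm N z)) * ennreal (max 0 (- z 0))" for z
  proof (rule LIMSEQ_unique[OF LIMSEQ_SUP])
    show "incseq (\<lambda>n. f n z)" by (intro incseq_SucI) (rule le_funD[OF incseq_SucD[OF inc]])
    have "(\<lambda>n. J (enorm N z) * Lb N (real (Suc n)) (max 0 (- z 0))) \<longlonglongrightarrow> J (enorm N z) * max 0 (- z 0)"
      by (intro tendsto_mult_left Lb_lim) simp
    then have "(\<lambda>n. f n z) \<longlonglongrightarrow> ennreal (J (enorm N z) * max 0 (- z 0))"
      unfolding f_def by (rule tendsto_ennrealI)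
    then show "(\<lambda>n. f n z) \<longlonglongrightarrow> ennreal (J (enorm N z)) * ennreal (max 0 (- z 0))"
      using Jenorm_nn[OF Jnn] by (simp add: ennreal_mult)
  qed
  have "(\<lambda>n. integral\<^sup>N (RN N) (f n)) \<longlonglongrightarrow> (SUP n. integral\<^sup>N (RN N) (f n))"
    by (intro LIMSEQ_SUP incseq_SucI nn_integral_mono) (rule le_funD[OF incseq_SucD[OF inc]])
  also have "(SUP n. integral\<^sup>N (RN N) (f n)) = (\<integral>\<^sup>+ z. (SUP n. f n z) \<partial>RN N)"
    by (rule nn_integral_monotone_convergence_SUP[symmetric, OF inc fm])
  also have "\<dots> = Kint N J" unfolding sup Kint_def ..
  finally show "(\<lambda>n. Lw N J (real (Suc n))) \<longlonglongrightarrow> Kint N J"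
    unfolding Lw_def f_def .
qed

lemma Uw_tendsto:
  assumes N: "2 \<le> N" and Jm[measurable]: "Jp J \<in> borel_measurable borel" and Jnn: "\<forall>r\<ge>0. J r \<ge> 0"
    and fin: "Inorm N J < \<infinity>"
  shows "(Uw N J \<longlongrightarrow> Kint N J) at_top"
proof (rule antimono_at_top_tendsto)
  have N0: "0 < N" using N by simp
  fix x y :: real assume "0 < x" "x \<le> y"
  then show "Uw N J y \<le> Uw N J x"
    unfolding Uw_def using Jenorm_nn[OF Jnn]
    by (intro nn_integral_mono ennreal_leI mult_left_mono Ub_mono sq_nonneg) auto
next
  have N0: "0 < N" using N by simp
  note c0_meas[OF N0, measurable]
  define f where "f n z = ennreal (J (enorm N z) * Ub (real (Suc n)) (z 0) (sq N z))" for n z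
  have fm: "f n \<in> borel_measurable (RN N)" for n
  proof -
    have "f n = (\<lambda>z. ennreal (Jp J (enorm N z) * (if sqrt ((z 0)^2 + sq N z) < real (Suc n) then min (sqrt ((z 0)^2 + sq N z)) (max 0 (- z 0 + sq N z / real (Suc n))) else sqrt ((z 0)^2 + sq N z))))"
      unfolding f_def Ub_def by (simp add: Jp_enorm[symmetric])
    also have "\<dots> \<in> borel_measurable (RN N)" by measurable
    finally show ?thesis .
  qed
  have dec: "decseq f"
    unfolding f_def using Jenorm_nn[OF Jnn]
    by (intro decseq_SucI le_funI ennreal_leI mult_left_mono Ub_mono sq_nonneg) auto
  have fin_n: "integral\<^sup>N (RN N) (f n) < \<infinity>" for n
  proof -
    have "integral\<^sup>N (RN N) (f n) \<le> Inorm N J"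
      unfolding f_def Inorm_def
    proof (rule nn_integral_mono)
      fix z
      have "Ub (real (Suc n)) (z 0) (sq N z) \<le> enorm N z"
        using Ub_le[OF sq_nonneg, of "real (Suc n)" "z 0" N z] enorm_sq[OF N0, of z] by simp
      then show "ennreal (J (enorm N z) * Ub (real (Suc n)) (z 0) (sq N z)) \<le> ennreal (J (enorm N z)) * ennreal (enorm N z)"
        using Jenorm_nn[OF Jnn] by (simp add: ennreal_mult[symmetric] enorm_nonneg ennreal_leI mult_left_mono)
    qed
    then show ?thesis using fin by (rule le_less_trans)
  qed
  have inf: "(INF n. f n z) = ennreal (J (enorm N z)) * ennreal (max 0 (- z 0))" for z
  proof (rule LIMSEQ_unique[OF LIMSEQ_INF])
    show "decseq (\<lambda>n. f n z)" by (intro decseq_SucI) (rule le_funD[OF decseq_SucD[OF dec]])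
    have "(\<lambda>n. J (enorm N z) * Ub (real (Suc n)) (z 0) (sq N z)) \<longlonglongrightarrow> J (enorm N z) * max 0 (- z 0)"
      by (intro tendsto_mult_left Ub_lim sq_nonneg)
    then have "(\<lambda>n. f n z) \<longlonglongrightarrow> ennreal (J (enorm N z) * max 0 (- z 0))"
      unfolding f_def by (rule tendsto_ennrealI)
    then show "(\<lambda>n. f n z) \<longlonglongrightarrow> ennreal (J (enorm N z)) * ennreal (max 0 (- z 0))"
      using Jenorm_nn[OF Jnn] by (simp add: ennreal_mult)
  qed
  have "(\<lambda>n. integral\<^sup>N (RN N) (f n)) \<longlonglongrightarrow> (INF n. integral\<^sup>N (RN N) (f n))"
    by (intro LIMSEQ_INF decseq_SucI nn_integral_mono) (rule le_funD[OF decseq_SucD[OF dec]])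
  also have "(INF n. integral\<^sup>N (RN N) (f n)) = (\<integral>\<^sup>+ z. (INF n. f n z) \<partial>RN N)"
    by (rule nn_integral_monotone_convergence_INF_decseq[symmetric, OF dec fm fin_n])
  also have "\<dots> = Kint N J" unfolding inf Kint_def ..
  finally show "(\<lambda>n. Uw N J (real (Suc n))) \<longlonglongrightarrow> Kint N J"
    unfolding Uw_def f_def .
qed

lemma main_w:
  assumes N: "2 \<le> N" and Jm[measurable]: "Jp J \<in> borel_measurable borel" and Jnn: "\<forall>r\<ge>0. J r \<ge> 0"
    and wm: "\<And>R. (\<lambda>r. w r R) \<in> borel_measurable borel"
    and wlow: "\<And>r R. 0 \<le> r \<Longrightarrow> r \<le> R \<Longrightarrow> (r / R)^(N - 1) \<le> w r R"
    and wup: "\<And>r R. 0 \<le> r \<Longrightarrow> r \<le> R \<Longrightarrow> w r R \<le> 1"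
  shows "Kint N J < \<infinity> \<Longrightarrow> (dbl N J w \<longlongrightarrow> Kint N J) at_top"
    and "Limsup at_top (dbl N J w) < \<infinity> \<longleftrightarrow> Kint N J < \<infinity>"
proof -
  have N0: "0 < N" using N by simp
  have evL: "eventually (\<lambda>R. Lw N J R \<le> dbl N J w R) at_top"
    unfolding eventually_at_top_linorder
    by (rule exI[of _ 1]) (auto intro!: dbl_bounds(1)[OF N Jm Jnn _ wm wlow wup])
  have evU: "eventually (\<lambda>R. dbl N J w R \<le> Uw N J R) at_top"
    unfolding eventually_at_top_linorder
    by (rule exI[of _ 1]) (auto intro!: dbl_bounds(2)[OF N Jm Jnn _ wm wlow wup])
  show conv: "(dbl N J w \<longlongrightarrow> Kint N J) at_top" if K: "Kint N J < \<infinity>"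
  proof -
    have "I1 N J < \<infinity>" using K finite_equiv(1)[OF N0 Jm Jnn] by simp
    then have "Inorm N J < \<infinity>" by (rule finite_equiv(2)[OF N0 Jm Jnn])
    then have U: "(Uw N J \<longlongrightarrow> Kint N J) at_top" by (rule Uw_tendsto[OF N Jm Jnn])
    show ?thesis by (rule tendsto_sandwich[OF evL evU Lw_tendsto[OF N Jm Jnn] U])
  qed
  show "Limsup at_top (dbl N J w) < \<infinity> \<longleftrightarrow> Kint N J < \<infinity>"
  proof
    assume L: "Limsup at_top (dbl N J w) < \<infinity>"
    have "Kint N J = Liminf at_top (Lw N J)"
      by (rule lim_imp_Liminf[symmetric, OF _ Lw_tendsto[OF N Jm Jnn]]) simp
    also have "\<dots> \<le> Liminf at_top (dbl N J w)" by (rule Liminf_mono[OF evL])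
    also have "\<dots> \<le> Limsup at_top (dbl N J w)" by (rule Liminf_le_Limsup) simp
    finally show "Kint N J < \<infinity>" using L by (rule le_less_trans)
  next
    assume K: "Kint N J < \<infinity>"
    have "Limsup at_top (dbl N J w) = Kint N J"
      by (rule lim_imp_Limsup[OF _ conv[OF K]]) simp
    then show "Limsup at_top (dbl N J w) < \<infinity>" using K by simp
  qed
qed

lemma pow_ratio_le_one: "0 \<le> r \<Longrightarrow> r \<le> R \<Longrightarrow> (r / R :: real) ^ n \<le> 1"
proof -
  assume r: "0 \<le> r" "r \<le> R"
  have "0 \<le> r / R" using r by simp
  moreover have "r / R \<le> 1"
  proof (cases "R = 0")
    case True then show ?thesis by simp
  next
    case False then have "R > 0" using r by simp
    then show ?thesis using r by simp
  qed
  ultimately show ?thesis by (rule power_le_one)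
qed

theorem theorem2p6:
  fixes N :: nat and J :: "real \<Rightarrow> real"
  assumes N2: "N \<ge> 2"
    and Jcont: "continuous_on {0..} J"
    and Jbdd: "\<exists>M. \<forall>r\<ge>0. \<bar>J r\<bar> \<le> M"
    and Jnonneg: "\<forall>r\<ge>0. J r \<ge> 0"
    and J0: "J 0 > 0"
    and Jint: "(\<integral>\<^sup>+ x. ennreal (J (enorm N x)) \<partial>Rn N) = 1"
  shows
    "((\<integral>\<^sup>+ r. ennreal (J r * r ^ N) * indicator {0..} r \<partial>lborel) < \<infinity>
        \<longleftrightarrow> (\<integral>\<^sup>+ l. Jstar N J l * ennreal l * indicator {0..} l \<partial>lborel) < \<infinity>)
     \<and> ((\<integral>\<^sup>+ l. Jstar N J l * ennreal l * indicator {0..} l \<partial>lborel) < \<infinity>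
        \<longleftrightarrow> Limsup at_top (dbl N J (\<lambda>r R. 1)) < \<infinity>)
     \<and> (Limsup at_top (dbl N J (\<lambda>r R. 1)) < \<infinity>
        \<longleftrightarrow> Limsup at_top (dbl N J (\<lambda>r R. (r / R) ^ (N - 1))) < \<infinity>)
     \<and> ((\<integral>\<^sup>+ r. ennreal (J r * r ^ N) * indicator {0..} r \<partial>lborel) < \<infinity> \<longrightarrow>
          (dbl N J (\<lambda>r R. 1) \<longlongrightarrow> (\<integral>\<^sup>+ l. Jstar N J l * ennreal l * indicator {0..} l \<partial>lborel)) at_top
        \<and> (dbl N J (\<lambda>r R. (r / R) ^ (N - 1)) \<longlongrightarrow> (\<integral>\<^sup>+ l. Jstar N J l * ennreal l * indicator {0..} l \<partial>lborel)) at_top)"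
proof -
  have N0: "0 < N" using N2 by simp
  have Jm: "Jp J \<in> borel_measurable borel"
  proof -
    have "continuous_on UNIV (\<lambda>t. J (max 0 t))"
      by (rule continuous_on_compose2[OF Jcont]) (auto intro!: continuous_intros)
    then show ?thesis unfolding Jp_def[abs_def] by (rule borel_measurable_continuous_onI)
  qed
  have Istar: "(\<integral>\<^sup>+ l. Jstar N J l * ennreal l * indicator {0..} l \<partial>lborel) = Kint N J"
    using Jstar_K[OF N0 Jm] unfolding Kint_def .
  have I1eq: "(\<integral>\<^sup>+ r. ennreal (J r * r ^ N) * indicator {0..} r \<partial>lborel) = I1 N J"
    unfolding I1_def ..
  have fe: "Kint N J < \<infinity> \<longleftrightarrow> I1 N J < \<infinity>" by (rule finite_equiv(1)[OF N0 Jm Jnonneg])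
  have m1a: "Kint N J < \<infinity> \<Longrightarrow> (dbl N J (\<lambda>r R. 1) \<longlongrightarrow> Kint N J) at_top"
    and m1b: "Limsup at_top (dbl N J (\<lambda>r R. 1)) < \<infinity> \<longleftrightarrow> Kint N J < \<infinity>"
    by (rule main_w[OF N2 Jm Jnonneg]; simp add: pow_ratio_le_one)+
  have m2a: "Kint N J < \<infinity> \<Longrightarrow> (dbl N J (\<lambda>r R. (r / R) ^ (N - 1)) \<longlongrightarrow> Kint N J) at_top"
    and m2b: "Limsup at_top (dbl N J (\<lambda>r R. (r / R) ^ (N - 1))) < \<infinity> \<longleftrightarrow> Kint N J < \<infinity>"
    by (rule main_w[OF N2 Jm Jnonneg]; simp add: pow_ratio_le_one)+
  show ?thesis
    unfolding Istar I1eq using fe m1a m1b m2a m2b by blast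
qed

end
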